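(* Let $r>0$ and $a\in[0,\frac12]$, and put $\alpha=\pi a$. Let $$\mathcal R_{r,\alpha}=\{(t\cos\theta,t\sin\theta):\ \alpha\le|\theta|\le\pi,\ t\in[0,r]\}$$ be the disk of radius $r$ centered at the origin $O$ with an angular sector of opening $2\alpha$ removed. The probability that the triangle formed by three independent uniformly distributed points of $\mathcal R_{r,\alpha}$ contains $O$ is $$\mathcal P_a=\frac{(1+a)(1-2a)^2}{4(1-a)^3}.$$ *)

theory Defs
  imports "HOL-Probability.Probability"
begin

definition cut_disk :: "real \<Rightarrow> real \<Rightarrow> (real \<times> real) set" where
  "cut_disk r \<alpha> = {(t * cos \<theta>, t * sin \<theta>) | t \<theta>.
      \<alpha> \<le> \<bar>\<theta>\<bar> \<and> \<bar>\<theta>\<bar> \<le> pi \<and> 0 \<le> t \<and> t \<le> r}"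

definition uniform_on :: "(real \<times> real) set \<Rightarrow> (real \<times> real) measure" where
  "uniform_on S = uniform_measure lborel S"

end

theory Submission
  imports Defs
begin


definition cr :: "real \<times> real \<Rightarrow> real \<times> real \<Rightarrow> real" where
  "cr p q = fst p * snd q - snd p * fst q"

lemma hull0_iff:
  fixes p q s :: "real \<times> real"
  shows "(0::real\<times>real) \<in> convex hull {p,q,s} \<longleftrightarrow> \<not>(\<exists>v. inner v p > 0 \<and> inner v q > 0 \<and> inner v s > 0)"
proof
  assume "0 \<in> convex hull {p,q,s}"
  then obtain u v w where uvw: "0 \<le> u" "0 \<le> v" "0 \<le> w" "u+v+w=1"
     and eq: "(0::real\<times>real) = u *\<^sub>R p + v *\<^sub>R q + w *\<^sub>R s"
    unfolding convex_hull_3 by auto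
  show "\<not>(\<exists>v. inner v p > 0 \<and> inner v q > 0 \<and> inner v s > 0)"
  proof
    assume "\<exists>z. inner z p > 0 \<and> inner z q > 0 \<and> inner z s > 0"
    then obtain z where z: "inner z p > 0" "inner z q > 0" "inner z s > 0" by blast
    have "inner z (u *\<^sub>R p + v *\<^sub>R q + w *\<^sub>R s) = u * inner z p + v * inner z q + w * inner z s"
      by (simp add: inner_add_right)
    also have "\<dots> > 0"
    proof -
      have "u * inner z p \<ge> 0" "v * inner z q \<ge> 0" "w * inner z s \<ge> 0" using uvw z by auto
      moreover have "u > 0 \<or> v > 0 \<or> w > 0" using uvw by linarith
      ultimately show ?thesis using z by (auto simp: add_pos_nonneg add_nonneg_pos)
    qed
    finally show False using eq by simp
  qed
next
  assume n: "\<not>(\<exists>v. inner v p > 0 \<and> inner v q > 0 \<and> inner v s > 0)"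
  show "0 \<in> convex hull {p,q,s}"
  proof (rule ccontr)
    assume "0 \<notin> convex hull {p,q,s}"
    then obtain a b where "a \<noteq> 0" "0 < b" "\<forall>x\<in>convex hull {p,q,s}. inner a x > b"
      using separating_hyperplane_closed_0[of "convex hull {p,q,s}"]
      by (auto simp: convex_convex_hull compact_imp_closed compact_convex_hull)
    then have "inner a p > 0" "inner a q > 0" "inner a s > 0"
      using hull_subset[of "{p,q,s}" convex] by force+
    then show False using n by blast
  qed
qed

lemma cr_exists_v:
  assumes "cr p q > 0" "cr p s > 0"
  shows "\<exists>v. inner v p > 0 \<and> inner v q > 0 \<and> inner v s > 0"
proof -
  have p0: "p \<noteq> 0" using assms by (auto simp: cr_def)
  have np: "inner p p > 0" using p0 by simp
  define d where "d = min 1 (min (cr p q / (1 + \<bar>inner p q\<bar>)) (cr p s / (1 + \<bar>inner p s\<bar>))) / 2"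
  have d0: "d > 0" using assms by (simp add: d_def)
  have dq: "d * \<bar>inner p q\<bar> < cr p q"
  proof -
    have "d \<le> cr p q / (1 + \<bar>inner p q\<bar>) / 2" unfolding d_def by (intro divide_right_mono) auto
    hence "d * (1 + \<bar>inner p q\<bar>) \<le> cr p q / 2" by (simp add: field_simps)
    moreover have "d * \<bar>inner p q\<bar> < d * (1 + \<bar>inner p q\<bar>)" using d0 by (simp add: distrib_left)
    ultimately show ?thesis using assms by linarith
  qed
  have ds: "d * \<bar>inner p s\<bar> < cr p s"
  proof -
    have "d \<le> cr p s / (1 + \<bar>inner p s\<bar>) / 2" unfolding d_def by (intro divide_right_mono) auto
    hence "d * (1 + \<bar>inner p s\<bar>) \<le> cr p s / 2" by (simp add: field_simps)
    moreover have "d * \<bar>inner p s\<bar> < d * (1 + \<bar>inner p s\<bar>)" using d0 by (simp add: distrib_left)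
    ultimately show ?thesis using assms by linarith
  qed
  define v where "v = (d * fst p - snd p, d * snd p + fst p)"
  have "inner v p = d * inner p p" by (simp add: v_def inner_prod_def algebra_simps)
  moreover have "inner v q = d * inner p q + cr p q" by (simp add: v_def inner_prod_def cr_def algebra_simps)
  moreover have "inner v s = d * inner p s + cr p s" by (simp add: v_def inner_prod_def cr_def algebra_simps)
  moreover have "d * inner p q \<ge> - (d * \<bar>inner p q\<bar>)"
    using mult_left_mono[OF abs_ge_minus_self[of "inner p q"], of d] d0 by simp
  moreover have "d * inner p s \<ge> - (d * \<bar>inner p s\<bar>)"
    using mult_left_mono[OF abs_ge_minus_self[of "inner p s"], of d] d0 by simp
  ultimately show ?thesis using d0 np dq ds by (intro exI[of _ v]) (auto intro: mult_pos_pos)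
qed

lemma cr_antisym: "cr q p = - cr p q" by (simp add: cr_def)

lemma cr_trans:
  assumes "inner v x > 0" "inner v y > 0" "inner v z > 0" "cr x y > 0" "cr y z > 0"
  shows "cr x z > 0"
proof -
  have id: "cr x y * inner v z + cr y z * inner v x + cr z x * inner v y = 0"
    by (simp add: cr_def inner_prod_def algebra_simps)
  have "cr x y * inner v z + cr y z * inner v x > 0" using assms by (simp add: add_pos_pos)
  hence "cr z x * inner v y < 0" using id by linarith
  hence "cr z x < 0" using assms(2) by (simp add: mult_less_0_iff)
  thus ?thesis by (simp add: cr_def mult.commute)
qed

lemma exists_v_cr:
  assumes v: "inner v p > 0" "inner v q > 0" "inner v s > 0"
    and nz: "cr p q \<noteq> 0" "cr q s \<noteq> 0" "cr p s \<noteq> 0"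
  shows "(cr p q > 0 \<and> cr p s > 0) \<or> (cr q p > 0 \<and> cr q s > 0) \<or> (cr s p > 0 \<and> cr s q > 0)"
proof -
  have e1: "cr q p > 0 \<longleftrightarrow> \<not> cr p q > 0" using nz(1) by (auto simp: cr_antisym[of q p])
  have e2: "cr s q > 0 \<longleftrightarrow> \<not> cr q s > 0" using nz(2) by (auto simp: cr_antisym[of s q])
  have e3: "cr s p > 0 \<longleftrightarrow> \<not> cr p s > 0" using nz(3) by (auto simp: cr_antisym[of s p])
  note t = cr_trans[OF v(1) v(2) v(3)] cr_trans[OF v(1) v(3) v(2)] cr_trans[OF v(2) v(1) v(3)]
        cr_trans[OF v(2) v(3) v(1)] cr_trans[OF v(3) v(1) v(2)] cr_trans[OF v(3) v(2) v(1)]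
  show ?thesis using t unfolding e1 e2 e3 by blast
qed


definition ang :: "real \<times> real \<Rightarrow> real" where
  "ang p = Arg2pi (Complex (fst p) (snd p))"

definition pol :: "real \<Rightarrow> real \<Rightarrow> real \<times> real" where
  "pol \<rho> t = (\<rho> * cos t, \<rho> * sin t)"

lemma ang_range: "0 \<le> ang p" "ang p < 2*pi"
  using Arg2pi[of "Complex (fst p) (snd p)"] by (auto simp: ang_def)

lemma norm_pair_cmod: "norm p = cmod (Complex (fst p) (snd p))"
  by (cases p) (simp add: norm_Pair complex_norm)

lemma pol_ang: "pol (norm p) (ang p) = p"
  using cos_Arg2pi[of "Complex (fst p) (snd p)"] sin_Arg2pi[of "Complex (fst p) (snd p)"]
  by (cases p) (simp add: pol_def ang_def norm_pair_cmod)

lemma norm_pol: "norm (pol \<rho> t) = \<bar>\<rho>\<bar>"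
proof -
  have "norm (pol \<rho> t) = sqrt ((\<rho> * cos t)^2 + (\<rho> * sin t)^2)"
    by (simp add: pol_def norm_Pair)
  also have "(\<rho> * cos t)^2 + (\<rho> * sin t)^2 = \<rho>^2 * ((cos t)^2 + (sin t)^2)"
    by (simp only: power_mult_distrib distrib_left)
  also have "\<rho>^2 * ((cos t)^2 + (sin t)^2) = \<rho>^2" by simp
  finally show ?thesis by simp
qed

lemma ang_pol: assumes "\<rho> > 0" "0 \<le> t" "t < 2*pi" shows "ang (pol \<rho> t) = t"
proof -
  have "Complex (\<rho> * cos t) (\<rho> * sin t) = of_real \<rho> * exp (\<i> * of_real t)"
    by (simp add: exp_Euler complex_eq_iff cos_of_real sin_of_real)
  thus ?thesis unfolding ang_def pol_def using assms
    by (intro Arg2pi_unique) auto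
qed

lemma pol_periodic: "pol \<rho> (t + 2*pi) = pol \<rho> t" "pol \<rho> (t - 2*pi) = pol \<rho> t"
  by (simp_all add: pol_def cos_diff sin_diff)

lemma cr_pol: "cr (pol a s) (pol b t) = a * b * sin (t - s)"
  by (simp add: cr_def pol_def sin_diff algebra_simps)

lemma ang_0 [simp]: "ang 0 = 0"
proof -
  have "Complex 0 0 = 0" by (simp add: complex_eq_iff)
  thus ?thesis by (simp add: ang_def zero_prod_def)
qed

lemma borel_measurable_ang [measurable]: "ang \<in> borel_measurable borel"
proof -
  have c: "(\<lambda>p::real\<times>real. Complex (fst p) (snd p)) \<in> borel_measurable borel"
    by (intro borel_measurable_continuous_onI continuous_intros)
  have "Arg2pi \<in> borel_measurable borel"
    by (rule borel_measurable_iff_le[THEN iffD2]) (auto intro: closed_Arg2pi2pi_le borel_closed)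
  thus ?thesis unfolding ang_def using c by (rule measurable_compose[rotated])
qed


lemma sector_deriv:
  fixes r c y :: real
  assumes r: "r > 0" and y: "-r < y" "y < r"
  shows "((\<lambda>y. (y * sqrt (r^2 - y^2) + r^2 * arcsin (y / r)) / 2 - y^2 * c / 2)
          has_real_derivative (sqrt (r^2 - y^2) - y * c)) (at y)"
proof -
  define s where "s = sqrt (r^2 - y^2)"
  have ry: "r^2 - y^2 > 0" using y r by (smt (verit) abs_less_iff power2_less_eq_zero_iff real_sqrt_abs real_sqrt_less_iff real_sqrt_pow2_iff sqrt_le_D)
  hence s0: "s > 0" by (simp add: s_def)
  have ss: "s^2 = r^2 - y^2" using ry by (simp add: s_def)
  have yr: "-1 < y/r" "y/r < 1" using y r by (simp_all add: field_simps)
  have sq1: "sqrt (1 - (y/r)^2) = s / r"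
  proof -
    have "1 - (y/r)^2 = (s/r)^2" using ss r by (simp add: field_simps power_divide)
    thus ?thesis using s0 r by simp
  qed
  have d1: "((\<lambda>y. sqrt (r^2 - y^2)) has_real_derivative (inverse s / 2) * (- (2 * y))) (at y)"
    unfolding s_def
    by (rule DERIV_chain2[where f=sqrt and g="\<lambda>y. r^2 - y^2", OF DERIV_real_sqrt[OF ry]]) (auto intro!: derivative_eq_intros)
  have d2: "((\<lambda>y. arcsin (y / r)) has_real_derivative inverse (s / r) * (1 / r)) (at y)"
    unfolding sq1[symmetric]
    by (rule DERIV_chain2[where f=arcsin and g="\<lambda>y. y / r", OF DERIV_arcsin[OF yr]]) (use r in \<open>auto intro!: derivative_eq_intros\<close>)
  have d3: "((\<lambda>y. y * sqrt (r^2 - y^2)) has_real_derivative sqrt (r^2 - y^2) + y * ((inverse s / 2) * (- (2 * y)))) (at y)"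
    using DERIV_mult'[OF DERIV_ident d1] by simp
  have d4: "((\<lambda>y. r^2 * arcsin (y / r)) has_real_derivative r^2 * (inverse (s / r) * (1 / r))) (at y)"
    by (rule DERIV_cmult[OF d2])
  have d5: "((\<lambda>y. (y * sqrt (r^2 - y^2) + r^2 * arcsin (y / r)) / 2) has_real_derivative
      (sqrt (r^2 - y^2) + y * ((inverse s / 2) * (- (2 * y))) + r^2 * (inverse (s / r) * (1 / r))) / 2) (at y)"
    by (rule DERIV_cdivide[OF DERIV_add[OF d3 d4]])
  have d6: "((\<lambda>y. y^2 * c / 2) has_real_derivative (2 * y * c / 2)) (at y)"
    by (auto intro!: derivative_eq_intros)
  note DERIV_diff[OF d5 d6]
  moreover have "(sqrt (r^2 - y^2) + y * ((inverse s / 2) * (- (2 * y))) + r^2 * (inverse (s / r) * (1 / r))) / 2 - (2 * y * c / 2)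
      = sqrt (r^2 - y^2) - y * c"
    using s0 r ss unfolding s_def[symmetric] by (simp add: field_simps power2_eq_square)
  ultimately show ?thesis by (simp only:)
qed

lemma sector_integral:
  fixes r \<beta> :: real
  assumes r: "r > 0" and b: "0 < \<beta>" "\<beta> \<le> pi/2"
  shows "((\<lambda>y. sqrt (r^2 - y^2) - y * (cos \<beta> / sin \<beta>)) has_integral r^2 * \<beta> / 2) {0..r * sin \<beta>}"
proof -
  define c where "c = cos \<beta> / sin \<beta>"
  define G where "G = (\<lambda>y. (y * sqrt (r^2 - y^2) + r^2 * arcsin (y / r)) / 2 - y^2 * c / 2)"
  have sb: "0 < sin \<beta>" "sin \<beta> \<le> 1" using b by (auto intro: sin_gt_zero)
  have cb: "0 \<le> cos \<beta>" using b by (intro cos_ge_zero) auto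
  have bnd: "0 \<le> r * sin \<beta>" "r * sin \<beta> \<le> r" using sb r by auto
  have "((\<lambda>y. sqrt (r^2 - y^2) - y * c) has_integral (G (r * sin \<beta>) - G 0)) {0..r * sin \<beta>}"
  proof (rule fundamental_theorem_of_calculus_interior)
    show "0 \<le> r * sin \<beta>" by (fact bnd)
    show "continuous_on {0..r * sin \<beta>} G" unfolding G_def using r bnd
      by (intro continuous_intros) (auto simp: field_simps intro: order_trans[OF _ bnd(2)])
    fix y assume "y \<in> {0<..<r * sin \<beta>}"
    hence y: "-r < y" "y < r" using bnd by auto
    show "(G has_vector_derivative sqrt (r^2 - y^2) - y * c) (at y)"
      unfolding G_def has_real_derivative_iff_has_vector_derivative[symmetric]
      by (rule sector_deriv[OF r y])
  qed
  moreover have "G (r * sin \<beta>) - G 0 = r^2 * \<beta> / 2"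
  proof -
    have "r^2 - (r * sin \<beta>)^2 = (r * cos \<beta>)^2"
      by (simp add: power_mult_distrib cos_squared_eq algebra_simps)
    hence sq: "sqrt (r^2 - (r * sin \<beta>)^2) = r * cos \<beta>" using r cb by simp
    have as: "arcsin (r * sin \<beta> / r) = \<beta>" using r b by (simp add: arcsin_sin)
    show ?thesis unfolding G_def sq as c_def using sb r
      by (simp add: field_simps power2_eq_square)
  qed
  ultimately show ?thesis by (simp add: c_def)
qed

definition sec :: "real \<Rightarrow> real \<Rightarrow> (real \<times> real) set" where
  "sec r \<theta> = {p. p \<noteq> 0 \<and> norm p \<le> r \<and> ang p < \<theta>}"

lemma sec_measurable [measurable]: "sec r \<theta> \<in> sets borel"
  unfolding sec_def by measurable

lemma fst_pol_ang: "fst p = norm p * cos (ang p)" and snd_pol_ang: "snd p = norm p * sin (ang p)"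
  using pol_ang[of p] by (metis fst_conv pol_def, metis snd_conv pol_def)

lemma sin_nonneg_imp: "0 \<le> t \<Longrightarrow> t < 2*pi \<Longrightarrow> 0 \<le> sin t \<Longrightarrow> t \<le> pi"
  using sin_lt_zero[of t] by force

lemma sec_quadrant:
  assumes r: "r > 0" and b: "0 < \<beta>" "\<beta> \<le> pi/2"
  shows "sec r \<beta> = {p. 0 \<le> snd p \<and> snd p * cos \<beta> < fst p * sin \<beta> \<and> (fst p)^2 + (snd p)^2 \<le> r^2}"
proof (intro set_eqI iffI)
  fix p :: "real \<times> real"
  define \<rho> t where "\<rho> = norm p" and "t = ang p"
  have t: "0 \<le> t" "t < 2*pi" using ang_range[of p] by (auto simp: t_def)
  have xy: "fst p = \<rho> * cos t" "snd p = \<rho> * sin t" by (simp_all add: \<rho>_def t_def fst_pol_ang snd_pol_ang)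
  have nr: "(fst p)^2 + (snd p)^2 \<le> r^2 \<longleftrightarrow> \<rho> \<le> r"
  proof -
    have "(fst p)^2 + (snd p)^2 = \<rho>^2" unfolding \<rho>_def by (cases p) (simp add: norm_Pair)
    thus ?thesis using r by (simp add: \<rho>_def power2_le_iff_abs_le)
  qed
  have cr: "snd p * cos \<beta> < fst p * sin \<beta> \<longleftrightarrow> \<rho> * sin (t - \<beta>) < 0"
    unfolding xy by (simp add: sin_diff algebra_simps)
  have sl: "sin (t - \<beta>) < 0 \<longleftrightarrow> t < \<beta>" if "t \<le> pi"
  proof
    assume "t < \<beta>"
    hence "0 < sin (\<beta> - t)" using b t by (intro sin_gt_zero) auto
    moreover have "sin (t - \<beta>) = - sin (\<beta> - t)" by (metis minus_diff_eq sin_minus)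
    ultimately show "sin (t - \<beta>) < 0" by simp
  next
    assume "sin (t - \<beta>) < 0"
    thus "t < \<beta>" using sin_ge_zero[of "t - \<beta>"] that b by force
  qed
  {
    assume "p \<in> sec r \<beta>"
    hence p: "p \<noteq> 0" "\<rho> \<le> r" "t < \<beta>" by (auto simp: sec_def \<rho>_def t_def)
    have rho: "\<rho> > 0" using p by (simp add: \<rho>_def)
    have "0 \<le> sin t" using t p b by (intro sin_ge_zero) auto
    moreover have "sin (t - \<beta>) < 0" using sl p b by auto
    ultimately show "p \<in> {p. 0 \<le> snd p \<and> snd p * cos \<beta> < fst p * sin \<beta> \<and> (fst p)^2 + (snd p)^2 \<le> r^2}"
      using rho p nr cr xy by (auto simp: mult_neg_pos mult_less_0_iff)
  }
  {
    assume "p \<in> {p. 0 \<le> snd p \<and> snd p * cos \<beta> < fst p * sin \<beta> \<and> (fst p)^2 + (snd p)^2 \<le> r^2}"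
    hence p: "0 \<le> \<rho> * sin t" "\<rho> * sin (t - \<beta>) < 0" "\<rho> \<le> r" using nr cr xy by auto
    have rho: "\<rho> > 0" using p(2) by (auto simp: \<rho>_def mult_less_0_iff)
    hence "0 \<le> sin t" using p(1) by (simp add: zero_le_mult_iff)
    hence "t \<le> pi" using sin_nonneg_imp t by auto
    hence "t < \<beta>" using sl p(2) rho by (simp add: mult_less_0_iff)
    thus "p \<in> sec r \<beta>" using rho p by (auto simp: sec_def \<rho>_def t_def)
  }
qed


lemma sets_lborel_pair: "sets (lborel \<Otimes>\<^sub>M lborel :: (real \<times> real) measure) = sets borel"
  by (metis lborel_prod sets_lborel)

lemma emeasure_slices:
  assumes "A \<in> sets (borel :: (real \<times> real) measure)"
  shows "emeasure lborel A = (\<integral>\<^sup>+y. emeasure lborel {x. (x, y) \<in> A} \<partial>lborel)"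
proof -
  have "emeasure (lborel :: (real \<times> real) measure) A = emeasure (lborel \<Otimes>\<^sub>M lborel) A"
    by (simp add: lborel_prod)
  also have "\<dots> = (\<integral>\<^sup>+y. emeasure lborel ((\<lambda>x. (x, y)) -` A) \<partial>lborel)"
    by (intro lborel_pair.emeasure_pair_measure_alt2) (subst lborel_prod, simp add: assms)
  finally show ?thesis by (simp add: vimage_def)
qed

lemma emeasure_slices1:
  assumes "A \<in> sets (borel :: (real \<times> real) measure)"
  shows "emeasure lborel A = (\<integral>\<^sup>+x. emeasure lborel {y. (x, y) \<in> A} \<partial>lborel)"
proof -
  have "emeasure (lborel :: (real \<times> real) measure) A = emeasure (lborel \<Otimes>\<^sub>M lborel) A"
    by (simp add: lborel_prod)
  also have "\<dots> = (\<integral>\<^sup>+x. emeasure lborel (Pair x -` A) \<partial>lborel)"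
    by (intro lborel.emeasure_pair_measure_alt) (subst lborel_prod, simp add: assms)
  finally show ?thesis by (simp add: vimage_def)
qed

lemma borel_Collect_less:
  fixes f g :: "'a::topological_space \<Rightarrow> real"
  shows "continuous_on UNIV f \<Longrightarrow> continuous_on UNIV g \<Longrightarrow> {x. f x < g x} \<in> sets borel"
  by (intro borel_open open_Collect_less) auto

lemma borel_Collect_le:
  fixes f g :: "'a::topological_space \<Rightarrow> real"
  shows "continuous_on UNIV f \<Longrightarrow> continuous_on UNIV g \<Longrightarrow> {x. f x \<le> g x} \<in> sets borel"
  by (intro borel_closed closed_Collect_le) auto

lemma sqrt_ge_iff_sq: "0 \<le> c \<Longrightarrow> c \<le> sqrt z \<longleftrightarrow> c^2 \<le> z"
  using real_le_rsqrt real_sqrt_le_iff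
  by (metis abs_of_nonneg order.trans real_sqrt_abs real_sqrt_ge_zero zero_le_power2)

lemma sec_area_quadrant:
  assumes r: "r > 0" and b: "0 < \<beta>" "\<beta> \<le> pi/2"
  shows "emeasure lborel (sec r \<beta>) = ennreal (r^2 * \<beta> / 2)"
proof -
  define c where "c = cos \<beta> / sin \<beta>"
  have sb: "0 < sin \<beta>" using b by (auto intro: sin_gt_zero)
  have cb: "0 \<le> cos \<beta>" using b by (intro cos_ge_zero) auto
  have c0: "0 \<le> c" using sb cb by (simp add: c_def)
  define h where "h y = (if y \<in> {0..r * sin \<beta>} then sqrt (r^2 - y^2) - y * c else 0)" for y
  define T where "T = {p::real\<times>real. 0 \<le> snd p \<and> snd p * cos \<beta> < fst p * sin \<beta> \<and> (fst p)^2 + (snd p)^2 \<le> r^2}"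
  have keq: "y * c \<le> sqrt (r^2 - y^2) \<longleftrightarrow> y \<le> r * sin \<beta>" if y: "0 \<le> y" for y
  proof -
    have "y * c \<le> sqrt (r^2 - y^2) \<longleftrightarrow> (y * c)^2 \<le> r^2 - y^2"
      using y c0 by (intro sqrt_ge_iff_sq) simp
    also have "\<dots> \<longleftrightarrow> y^2 * (cos \<beta>)^2 \<le> (r^2 - y^2) * (sin \<beta>)^2"
      using sb by (simp add: c_def power_mult_distrib power_divide field_simps)
    also have "\<dots> \<longleftrightarrow> y^2 \<le> (r * sin \<beta>)^2"
      by (simp add: cos_squared_eq power_mult_distrib algebra_simps)
    also have "\<dots> \<longleftrightarrow> y \<le> r * sin \<beta>"
      using y r sb by (simp add: power2_le_iff_abs_le)
    finally show ?thesis .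
  qed
  have slice: "emeasure lborel {x. (x, y) \<in> T} = ennreal (h y)" for y
  proof (cases "0 \<le> y \<and> y^2 \<le> r^2")
    case True
    hence y: "0 \<le> y" "y^2 \<le> r^2" by auto
    have "{x. (x, y) \<in> T} = {y * c <.. sqrt (r^2 - y^2)}"
    proof (intro set_eqI iffI)
      fix x assume "x \<in> {x. (x, y) \<in> T}"
      hence x: "y * cos \<beta> < x * sin \<beta>" "x^2 + y^2 \<le> r^2" by (auto simp: T_def)
      have "y * c < x" using x(1) sb by (simp add: c_def field_simps)
      moreover have "x \<le> sqrt (r^2 - y^2)"
        using x(2) by (intro real_le_rsqrt) simp
      ultimately show "x \<in> {y * c <.. sqrt (r^2 - y^2)}" by simp
    next
      fix x assume "x \<in> {y * c <.. sqrt (r^2 - y^2)}"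
      hence x: "y * c < x" "x \<le> sqrt (r^2 - y^2)" by auto
      have x0: "0 \<le> x" using x y c0 by (meson mult_nonneg_nonneg order.trans less_imp_le)
      have "x^2 \<le> r^2 - y^2" using x(2) x0 sqrt_ge_iff_sq by blast
      moreover have "y * cos \<beta> < x * sin \<beta>" using x(1) sb by (simp add: c_def field_simps)
      ultimately show "x \<in> {x. (x, y) \<in> T}" using y by (simp add: T_def)
    qed
    moreover have "emeasure lborel {y * c <.. sqrt (r^2 - y^2)} = ennreal (h y)"
    proof (cases "y \<le> r * sin \<beta>")
      case True
      hence "y * c \<le> sqrt (r^2 - y^2)" using keq y by blast
      thus ?thesis using True y by (simp add: h_def)
    next
      case False
      hence "\<not> y * c \<le> sqrt (r^2 - y^2)" using keq y by blast
      hence "{y * c <.. sqrt (r^2 - y^2)} = {}" by auto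
      thus ?thesis using False by (simp add: h_def)
    qed
    ultimately show ?thesis by simp
  next
    case False
    have "{x. (x, y) \<in> T} = {}"
    proof -
      { fix x assume "(x, y) \<in> T"
        hence "0 \<le> y" "x^2 + y^2 \<le> r^2" by (auto simp: T_def)
        moreover have "0 \<le> x^2" by simp
        ultimately have False using False by linarith }
      thus ?thesis by auto
    qed
    moreover have "h y = 0"
    proof (cases "y \<in> {0..r * sin \<beta>}")
      case True
      moreover have "r * sin \<beta> \<le> r" using r by (simp add: mult_left_le sin_le_one)
      ultimately have "y^2 \<le> r^2" by (intro power_mono) auto
      thus ?thesis using False True by auto
    qed (auto simp: h_def)
    ultimately show ?thesis by simp
  qed
  have Tm: "T \<in> sets borel"
  proof -
    have "T = {p. 0 \<le> snd p} \<inter> {p. snd p * cos \<beta> < fst p * sin \<beta>} \<inter> {p. (fst p)^2 + (snd p)^2 \<le> r^2}"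
      by (auto simp: T_def)
    also have "\<dots> \<in> sets borel"
      by (intro sets.Int borel_Collect_less borel_Collect_le continuous_intros)
    finally show ?thesis .
  qed
  have "emeasure lborel (sec r \<beta>) = emeasure lborel T"
    using sec_quadrant[OF r b] by (simp add: T_def)
  also have "\<dots> = (\<integral>\<^sup>+y. ennreal (h y) \<partial>lborel)"
    using emeasure_slices[OF Tm] slice by simp
  also have "\<dots> = ennreal (r^2 * \<beta> / 2)"
  proof -
    have hi: "(h has_integral r^2 * \<beta> / 2) UNIV"
      unfolding h_def has_integral_restrict_UNIV using sector_integral[OF r b] by (simp add: c_def)
    have hn: "0 \<le> h y" for y
      using keq[of y] by (auto simp: h_def)
    have hm: "h \<in> borel_measurable borel" unfolding h_def by measurable
    show ?thesis by (rule nn_integral_has_integral_lborel[OF hm hn hi, THEN arg_cong[where f=id], simplified])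
  qed
  finally show ?thesis .
qed

definition rotm :: "real \<times> real \<Rightarrow> real \<times> real" where
  "rotm p = (snd p, - fst p)"

lemma rotm_measurable [measurable]: "rotm \<in> borel_measurable borel"
  unfolding rotm_def by (intro borel_measurable_continuous_onI continuous_intros)

lemma slice_borel: "A \<in> sets (borel :: (real \<times> real) measure) \<Longrightarrow> {z. (y, z) \<in> A} \<in> sets borel"
  using sets_Pair1[of A borel borel y] by (simp add: borel_prod vimage_def)

lemma emeasure_uminus_real: "B \<in> sets borel \<Longrightarrow> emeasure lborel {x::real. - x \<in> B} = emeasure lborel B"
proof -
  assume B: "B \<in> sets borel"
  have "emeasure lborel B = emeasure (distr lborel borel uminus) B" by (simp add: lborel_distr_uminus)
  also have "\<dots> = emeasure lborel (uminus -` B \<inter> space lborel)" using B by (intro emeasure_distr) auto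
  finally show ?thesis by (simp add: vimage_def)
qed

lemma rotm_preserve:
  assumes A: "A \<in> sets (borel :: (real \<times> real) measure)"
  shows "emeasure lborel {p. rotm p \<in> A} = emeasure lborel A"
proof -
  have Am: "{p. rotm p \<in> A} \<in> sets borel"
    using measurable_sets[OF rotm_measurable A] by (simp add: vimage_def)
  have "emeasure lborel {p. rotm p \<in> A} = (\<integral>\<^sup>+y. emeasure lborel {x. (x, y) \<in> {p. rotm p \<in> A}} \<partial>lborel)"
    by (rule emeasure_slices[OF Am])
  also have "\<dots> = (\<integral>\<^sup>+y. emeasure lborel {z. (y, z) \<in> A} \<partial>lborel)"
  proof (intro nn_integral_cong)
    fix y :: real
    have "{x. (x, y) \<in> {p. rotm p \<in> A}} = {x. - x \<in> {z. (y, z) \<in> A}}" by (simp add: rotm_def)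
    thus "emeasure lborel {x. (x, y) \<in> {p. rotm p \<in> A}} = emeasure lborel {z. (y, z) \<in> A}"
      using emeasure_uminus_real[OF slice_borel[OF A, of y]] by simp
  qed
  also have "\<dots> = emeasure lborel A" by (rule emeasure_slices1[OF A, symmetric])
  finally show ?thesis .
qed

lemma rotm_pol: "rotm (pol \<rho> t) = pol \<rho> (t - pi/2)"
  by (simp add: rotm_def pol_def cos_diff sin_diff)

lemma rotm_zero_iff: "rotm p = 0 \<longleftrightarrow> p = 0"
  by (cases p) (auto simp: rotm_def zero_prod_def)

lemma norm_rotm: "norm (rotm p) = norm p"
  by (cases p) (simp add: rotm_def norm_Pair add.commute)

lemma sec_rot:
  assumes "0 \<le> \<theta>" "\<theta> \<le> 3*pi/2"
  shows "{p. rotm p \<in> sec r \<theta>} = {p. p \<noteq> 0 \<and> norm p \<le> r \<and> pi/2 \<le> ang p \<and> ang p < \<theta> + pi/2}"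
proof (intro set_eqI)
  fix p :: "real \<times> real"
  show "p \<in> {p. rotm p \<in> sec r \<theta>} \<longleftrightarrow> p \<in> {p. p \<noteq> 0 \<and> norm p \<le> r \<and> pi/2 \<le> ang p \<and> ang p < \<theta> + pi/2}"
  proof (cases "p = 0")
    case True thus ?thesis by (simp add: sec_def rotm_zero_iff)
  next
    case False
    define \<rho> t where "\<rho> = norm p" and "t = ang p"
    have rho: "\<rho> > 0" using False by (simp add: \<rho>_def)
    have t: "0 \<le> t" "t < 2*pi" using ang_range[of p] by (auto simp: t_def)
    have p: "p = pol \<rho> t" by (simp add: \<rho>_def t_def pol_ang)
    have "ang (rotm p) = (if pi/2 \<le> t then t - pi/2 else t + 3*pi/2)"
    proof (cases "pi/2 \<le> t")
      case True
      thus ?thesis using t rho by (simp add: p rotm_pol ang_pol)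
    next
      case False
      have "rotm p = pol \<rho> ((t + 3*pi/2) - 2*pi)" by (simp add: p rotm_pol algebra_simps)
      also have "\<dots> = pol \<rho> (t + 3*pi/2)" by (rule pol_periodic(2))
      finally show ?thesis using False t rho by (simp add: ang_pol)
    qed
    moreover have "0 \<le> ang p" by (rule ang_range)
    ultimately show ?thesis using False assms by (auto simp: sec_def rotm_zero_iff norm_rotm \<rho>_def t_def)
  qed
qed

lemma sec_step:
  assumes r: "r > 0" and th: "0 \<le> \<theta>" "\<theta> \<le> 3*pi/2"
    and F: "emeasure lborel (sec r \<theta>) = ennreal (r^2 * \<theta> / 2)"
  shows "emeasure lborel (sec r (\<theta> + pi/2)) = ennreal (r^2 * (\<theta> + pi/2) / 2)"
proof -
  have eq: "sec r (\<theta> + pi/2) = sec r (pi/2) \<union> {p. rotm p \<in> sec r \<theta>}"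
    unfolding sec_rot[OF th] using th by (auto simp: sec_def)
  have dj: "sec r (pi/2) \<inter> {p. rotm p \<in> sec r \<theta>} = {}"
    unfolding sec_rot[OF th] by (auto simp: sec_def)
  have m2: "{p. rotm p \<in> sec r \<theta>} \<in> sets borel"
    using measurable_sets[OF rotm_measurable sec_measurable] by (simp add: vimage_def)
  have "emeasure lborel (sec r (\<theta> + pi/2)) = emeasure lborel (sec r (pi/2)) + emeasure lborel {p. rotm p \<in> sec r \<theta>}"
    unfolding eq using dj m2 by (intro plus_emeasure[symmetric]) auto
  also have "\<dots> = ennreal (r^2 * (pi/2) / 2) + ennreal (r^2 * \<theta> / 2)"
    using sec_area_quadrant[OF r, of "pi/2"] rotm_preserve[OF sec_measurable] F by simp
  also have "\<dots> = ennreal (r^2 * (pi/2) / 2 + r^2 * \<theta> / 2)"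
    using th by (intro ennreal_plus[symmetric]) auto
  also have "r^2 * (pi/2) / 2 + r^2 * \<theta> / 2 = r^2 * (\<theta> + pi/2) / 2"
    by (simp add: field_simps)
  finally show ?thesis .
qed

lemma sec_area:
  assumes r: "r > 0" and th: "0 \<le> \<theta>" "\<theta> \<le> 2*pi"
  shows "emeasure lborel (sec r \<theta>) = ennreal (r^2 * \<theta> / 2)"
proof -
  have base: "emeasure lborel (sec r t) = ennreal (r^2 * t / 2)" if "0 \<le> t" "t \<le> pi/2" for t
  proof (cases "t = 0")
    case True
    have "sec r 0 = {}" using ang_range by (auto simp: sec_def not_less)
    thus ?thesis using True by simp
  next
    case False thus ?thesis using that by (intro sec_area_quadrant[OF r]) auto
  qed
  consider "\<theta> \<le> pi/2" | "pi/2 < \<theta>" "\<theta> \<le> pi" | "pi < \<theta>" "\<theta> \<le> 3*pi/2" | "3*pi/2 < \<theta>" by linarith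
  thus ?thesis
  proof cases
    case 1 thus ?thesis using base th by auto
  next
    case 2
    have "emeasure lborel (sec r ((\<theta> - pi/2) + pi/2)) = ennreal (r^2 * ((\<theta> - pi/2) + pi/2) / 2)"
      using 2 by (intro sec_step[OF r] base) auto
    thus ?thesis by simp
  next
    case 3
    have "emeasure lborel (sec r ((\<theta> - pi) + pi/2)) = ennreal (r^2 * ((\<theta> - pi) + pi/2) / 2)"
      using 3 by (intro sec_step[OF r] base) auto
    hence "emeasure lborel (sec r ((\<theta> - pi/2) + pi/2)) = ennreal (r^2 * ((\<theta> - pi/2) + pi/2) / 2)"
      using 3 by (intro sec_step[OF r]) (auto simp: algebra_simps)
    thus ?thesis by simp
  next
    case 4
    have "emeasure lborel (sec r ((\<theta> - 3*pi/2) + pi/2)) = ennreal (r^2 * ((\<theta> - 3*pi/2) + pi/2) / 2)"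
      using 4 th by (intro sec_step[OF r] base) auto
    hence "emeasure lborel (sec r ((\<theta> - pi) + pi/2)) = ennreal (r^2 * ((\<theta> - pi) + pi/2) / 2)"
      using 4 th by (intro sec_step[OF r]) (auto simp: algebra_simps)
    hence "emeasure lborel (sec r ((\<theta> - pi/2) + pi/2)) = ennreal (r^2 * ((\<theta> - pi/2) + pi/2) / 2)"
      using 4 th by (intro sec_step[OF r]) (auto simp: algebra_simps)
    thus ?thesis by simp
  qed
qed


lemma cr_measurable [measurable]: "{p. cr u p = 0} \<in> sets borel"
  unfolding cr_def by (intro borel_closed closed_Collect_eq continuous_intros)

lemma line_null:
  assumes u: "u \<noteq> 0"
  shows "{p. cr u p = 0} \<in> null_sets lborel"
proof -
  have m: "{p. cr u p = 0} \<in> sets borel" by (rule cr_measurable)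
  have "emeasure lborel {p. cr u p = 0} = 0"
  proof (cases "snd u = 0")
    case False
    have "emeasure lborel {p. cr u p = 0} = (\<integral>\<^sup>+y. emeasure lborel {x. (x, y) \<in> {p. cr u p = 0}} \<partial>lborel)"
      by (rule emeasure_slices[OF m])
    also have "\<dots> = (\<integral>\<^sup>+y. 0 \<partial>lborel)"
    proof -
      have "emeasure lborel {x. (x, y) \<in> {p. cr u p = 0}} = 0" for y
      proof -
        have "{x. (x, y) \<in> {p. cr u p = 0}} = {fst u * y / snd u}"
          using False by (auto simp: cr_def field_simps)
        thus ?thesis by simp
      qed
      thus ?thesis by simp
    qed
    finally show ?thesis by simp
  next
    case True
    hence f: "fst u \<noteq> 0" using u by (cases u) (auto simp: zero_prod_def)
    have "emeasure lborel {p. cr u p = 0} = (\<integral>\<^sup>+x. emeasure lborel {y. (x, y) \<in> {p. cr u p = 0}} \<partial>lborel)"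
      by (rule emeasure_slices1[OF m])
    also have "\<dots> = (\<integral>\<^sup>+y. 0 \<partial>lborel)"
    proof -
      have "emeasure lborel {y. (x, y) \<in> {p. cr u p = 0}} = 0" for x
      proof -
        have "{y. (x, y) \<in> {p. cr u p = 0}} = {0}"
          using True f by (auto simp: cr_def)
        thus ?thesis by simp
      qed
      thus ?thesis by simp
    qed
    finally show ?thesis by simp
  qed
  thus ?thesis using m by (simp add: null_sets_def)
qed

lemma pol_nonzero: "pol 1 \<theta> \<noteq> 0"
proof
  assume "pol 1 \<theta> = 0"
  hence "norm (pol 1 \<theta>) = 0" by simp
  thus False by (simp add: norm_pol)
qed

lemma ray_null: "{p. ang p = \<theta>} \<in> null_sets lborel"
proof (rule null_sets_subset[OF line_null[OF pol_nonzero[of \<theta>]]])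
  show "{p. ang p = \<theta>} \<in> sets lborel" by simp
  show "{p. ang p = \<theta>} \<subseteq> {p. cr (pol 1 \<theta>) p = 0}"
  proof (rule subsetI)
    fix p assume "p \<in> {p. ang p = \<theta>}"
    hence "ang p = \<theta>" by simp
    hence "p = pol (norm p) \<theta>" using pol_ang[of p] by simp
    hence "cr (pol 1 \<theta>) p = cr (pol 1 \<theta>) (pol (norm p) \<theta>)" by simp
    also have "\<dots> = 0" by (simp add: cr_pol)
    finally show "p \<in> {p. cr (pol 1 \<theta>) p = 0}" by simp
  qed
qed

definition band :: "real \<Rightarrow> real \<Rightarrow> real \<Rightarrow> (real \<times> real) set" where
  "band r a b = {p. p \<noteq> 0 \<and> norm p \<le> r \<and> a \<le> ang p \<and> ang p \<le> b}"

lemma band_measurable [measurable]: "band r a b \<in> sets borel"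
  unfolding band_def by measurable

lemma band_area:
  assumes r: "r > 0" and ab: "0 \<le> a" "a \<le> b" "b \<le> 2*pi"
  shows "emeasure lborel (band r a b) = ennreal (r^2 * (b - a) / 2)"
proof -
  have eq: "band r a b = (sec r b - sec r a) \<union> (band r a b \<inter> {p. ang p = b})"
    by (auto simp: band_def sec_def)
  have n: "band r a b \<inter> {p. ang p = b} \<in> null_sets lborel"
    by (rule null_sets_subset[OF ray_null[of b]]) auto
  have "emeasure lborel (band r a b) = emeasure lborel (sec r b - sec r a)"
    by (subst eq, rule emeasure_Un_null_set[OF _ n]) simp
  also have "\<dots> = emeasure lborel (sec r b) - emeasure lborel (sec r a)"
  proof (rule emeasure_Diff)
    show "emeasure lborel (sec r a) \<noteq> \<infinity>" using sec_area[OF r, of a] ab by simp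
    show "sec r a \<subseteq> sec r b" using ab by (auto simp: sec_def)
  qed auto
  also have "\<dots> = ennreal (r^2 * b / 2) - ennreal (r^2 * a / 2)"
    using ab by (simp add: sec_area[OF r])
  also have "\<dots> = ennreal (r^2 * b / 2 - r^2 * a / 2)"
    using ab by (intro ennreal_minus) auto
  also have "r^2 * b / 2 - r^2 * a / 2 = r^2 * (b - a) / 2" by (simp add: field_simps)
  finally show ?thesis .
qed

lemma cut_disk_eq:
  assumes r: "r \<ge> 0" and al: "0 \<le> \<alpha>" "\<alpha> \<le> pi"
  shows "cut_disk r \<alpha> = insert 0 (band r \<alpha> (2*pi - \<alpha>))"
proof (intro set_eqI iffI)
  fix p assume "p \<in> cut_disk r \<alpha>"
  then obtain t \<theta> where p: "p = pol t \<theta>" and th: "\<alpha> \<le> \<bar>\<theta>\<bar>" "\<bar>\<theta>\<bar> \<le> pi" and t: "0 \<le> t" "t \<le> r"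
    by (auto simp: cut_disk_def pol_def)
  show "p \<in> insert 0 (band r \<alpha> (2*pi - \<alpha>))"
  proof (cases "t = 0")
    case True thus ?thesis by (simp add: p pol_def zero_prod_def)
  next
    case False
    hence t0: "t > 0" using t by simp
    have np: "norm p = t" using t by (simp add: p norm_pol)
    have pz: "p \<noteq> 0" using np t0 by auto
    show ?thesis
    proof (cases "0 \<le> \<theta>")
      case True
      have "\<theta> < 2*pi" using th pi_gt_zero by linarith
      hence "ang p = \<theta>" using True th t0 by (simp add: p ang_pol)
      thus ?thesis using th True np t pz by (auto simp: band_def)
    next
      case False
      have "p = pol t (\<theta> + 2*pi)" by (simp add: p pol_periodic)
      hence "ang p = \<theta> + 2*pi" using th t0 False by (simp add: ang_pol)
      thus ?thesis using th False np t pz by (auto simp: band_def)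
    qed
  qed
next
  fix p assume "p \<in> insert 0 (band r \<alpha> (2*pi - \<alpha>))"
  thus "p \<in> cut_disk r \<alpha>"
  proof
    assume "p = 0"
    thus ?thesis using al r unfolding cut_disk_def
      by (intro CollectI exI[of _ 0] exI[of _ pi]) (auto simp: zero_prod_def)
  next
    assume pb: "p \<in> band r \<alpha> (2*pi - \<alpha>)"
    define \<rho> t where "\<rho> = norm p" and "t = ang p"
    have pp: "p = pol \<rho> t" by (simp add: \<rho>_def t_def pol_ang)
    have h: "\<rho> \<le> r" "0 \<le> \<rho>" "\<alpha> \<le> t" "t \<le> 2*pi - \<alpha>" using pb by (auto simp: band_def \<rho>_def t_def)
    show ?thesis
    proof (cases "t \<le> pi")
      case True
      thus ?thesis using h al unfolding cut_disk_def pp pol_def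
        by (intro CollectI exI[of _ \<rho>] exI[of _ t]) auto
    next
      case False
      have "p = pol \<rho> (t - 2*pi)" by (simp add: pp pol_periodic)
      thus ?thesis using h al False unfolding cut_disk_def pol_def
        by (intro CollectI exI[of _ \<rho>] exI[of _ "t - 2*pi"]) auto
    qed
  qed
qed

lemma cut_disk_measurable: "r \<ge> 0 \<Longrightarrow> 0 \<le> \<alpha> \<Longrightarrow> \<alpha> \<le> pi \<Longrightarrow> cut_disk r \<alpha> \<in> sets borel"
  by (simp add: cut_disk_eq)

lemma cut_disk_area:
  assumes r: "r > 0" and al: "0 \<le> \<alpha>" "\<alpha> \<le> pi"
  shows "emeasure lborel (cut_disk r \<alpha>) = ennreal (r^2 * (2*pi - 2*\<alpha>) / 2)"
proof -
  have "emeasure lborel (cut_disk r \<alpha>) = emeasure lborel (band r \<alpha> (2*pi - \<alpha>) \<union> {0})"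
    using r al by (simp add: cut_disk_eq)
  also have "\<dots> = emeasure lborel (band r \<alpha> (2*pi - \<alpha>))"
    by (rule emeasure_Un_null_set) auto
  also have "\<dots> = ennreal (r^2 * (2*pi - 2*\<alpha>) / 2)"
    using al by (subst band_area[OF r]) (auto simp: algebra_simps)
  finally show ?thesis .
qed


locale cd =
  fixes r \<alpha> :: real
  assumes r: "r > 0" and a0: "0 \<le> \<alpha>" and a1: "\<alpha> \<le> pi/2"
begin

abbreviation "S \<equiv> cut_disk r \<alpha>"
abbreviation "U \<equiv> uniform_measure lborel S"
abbreviation "V \<equiv> uniform_measure lborel {\<alpha>..2*pi-\<alpha>}"
abbreviation "L \<equiv> 2*pi - 2*\<alpha>"

lemma L_pos: "L > 0" using a1 pi_gt_zero by linarith

lemma S_meas [measurable]: "S \<in> sets borel"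
  using cut_disk_measurable[of r \<alpha>] r a0 a1 pi_gt_zero by linarith

lemma S_eq: "S = insert 0 (band r \<alpha> (2*pi - \<alpha>))"
  using cut_disk_eq[of r \<alpha>] r a0 a1 pi_gt_zero by linarith

lemma S_area: "emeasure lborel S = ennreal (r^2 * L / 2)"
  using cut_disk_area[of r \<alpha>] r a0 a1 pi_gt_zero by (simp add: algebra_simps)

lemma S_area_pos: "r^2 * L / 2 > 0" using r L_pos by simp

lemma U_prob: "prob_space U"
  by (rule prob_space_uniform_measure) (use S_area S_area_pos in auto)

lemma emeasure_U: "B \<in> sets borel \<Longrightarrow> emeasure U B = emeasure lborel (S \<inter> B) / ennreal (r^2 * L / 2)"
  by (simp add: S_area)

lemma V_Ioi: "emeasure V {x<..} = ennreal ((2*pi - \<alpha> - max \<alpha> (min x (2*pi - \<alpha>))) / L)"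
proof -
  have LL: "emeasure lborel {\<alpha>..2*pi-\<alpha>} = ennreal L" using L_pos by simp
  have "emeasure V {x<..} = emeasure lborel ({\<alpha>..2*pi-\<alpha>} \<inter> {x<..}) / ennreal L"
    using LL by simp
  also have "emeasure lborel ({\<alpha>..2*pi-\<alpha>} \<inter> {x<..}) = ennreal (2*pi - \<alpha> - max \<alpha> (min x (2*pi - \<alpha>)))"
  proof -
    consider "x < \<alpha>" | "\<alpha> \<le> x" "x \<le> 2*pi-\<alpha>" | "2*pi - \<alpha> < x" by linarith
    thus ?thesis
    proof cases
      case 1
      hence "{\<alpha>..2*pi-\<alpha>} \<inter> {x<..} = {\<alpha>..2*pi-\<alpha>}" by auto
      thus ?thesis using 1 L_pos by (simp add: max_def min_def)
    next
      case 2
      hence "{\<alpha>..2*pi-\<alpha>} \<inter> {x<..} = {x<..2*pi-\<alpha>}" by auto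
      thus ?thesis using 2 by (simp add: max_def min_def)
    next
      case 3
      hence "{\<alpha>..2*pi-\<alpha>} \<inter> {x<..} = {}" by auto
      thus ?thesis using 3 L_pos by (simp add: max_def min_def)
    qed
  qed
  also have "ennreal (2*pi - \<alpha> - max \<alpha> (min x (2*pi - \<alpha>))) / ennreal L
      = ennreal ((2*pi - \<alpha> - max \<alpha> (min x (2*pi - \<alpha>))) / L)"
    using L_pos by (intro divide_ennreal) (auto simp: max_def min_def)
  finally show ?thesis .
qed


lemma cancel_aux: "(c::real) \<noteq> 0 \<Longrightarrow> c * K / 2 / (c * M / 2) = K / M"
  by (cases "M = 0") (simp_all add: field_simps)

lemma U_Ioi: "emeasure U {p. x < ang p} = ennreal ((2*pi - \<alpha> - max \<alpha> (min x (2*pi - \<alpha>))) / L)"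
proof -
  have B: "{p. x < ang p} \<in> sets borel" by measurable
  have "emeasure lborel (S \<inter> {p. x < ang p}) = emeasure lborel (S \<inter> {p. x < ang p} - {0})"
    by (rule emeasure_Diff_null_set[symmetric]) (auto intro: B)
  also have "\<dots> = ennreal (r^2 * (2*pi - \<alpha> - max \<alpha> (min x (2*pi - \<alpha>))) / 2)"
  proof -
    consider "x < \<alpha>" | "\<alpha> \<le> x" "x \<le> 2*pi-\<alpha>" | "2*pi - \<alpha> < x" by linarith
    thus ?thesis
    proof cases
      case 1
      hence "S \<inter> {p. x < ang p} - {0} = band r \<alpha> (2*pi - \<alpha>)"
        unfolding S_eq by (auto simp: band_def)
      thus ?thesis using 1 a0 a1 by (simp add: band_area[OF r] max_def min_def)
    next
      case 2
      hence e: "S \<inter> {p. x < ang p} - {0} = band r x (2*pi - \<alpha>) - {p. ang p = x}"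
        unfolding S_eq by (auto simp: band_def)
      have m: "emeasure lborel (band r x (2*pi - \<alpha>) - {p. ang p = x}) = emeasure lborel (band r x (2*pi - \<alpha>))"
        by (rule emeasure_Diff_null_set[OF ray_null]) simp
      show ?thesis unfolding e m using 2 a0 a1 by (simp add: band_area[OF r] max_def min_def)
    next
      case 3
      hence e: "S \<inter> {p. x < ang p} - {0} = {}"
        unfolding S_eq by (auto simp: band_def)
      have "\<alpha> \<le> pi" using a1 pi_gt_zero by linarith
      thus ?thesis unfolding e using 3 by (simp add: max_def min_def)
    qed
  qed
  finally have "emeasure U {p. x < ang p} = ennreal (r^2 * (2*pi - \<alpha> - max \<alpha> (min x (2*pi - \<alpha>))) / 2) / ennreal (r^2 * L / 2)"
    using emeasure_U[OF B] by simp
  also have "\<dots> = ennreal (r^2 * (2*pi - \<alpha> - max \<alpha> (min x (2*pi - \<alpha>))) / 2 / (r^2 * L / 2))"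
    using S_area_pos a0 a1 by (intro divide_ennreal) (auto simp: max_def min_def)
  also have "r^2 * (2*pi - \<alpha> - max \<alpha> (min x (2*pi - \<alpha>))) / 2 / (r^2 * L / 2) = (2*pi - \<alpha> - max \<alpha> (min x (2*pi - \<alpha>))) / L"
    using r by (rule_tac cancel_aux) simp
  finally show ?thesis .
qed

lemma meas_U: "measurable U N = measurable borel N"
  by (rule measurable_cong_sets) simp_all

lemma ang_meas_U [measurable]: "ang \<in> borel_measurable U"
  unfolding meas_U by (rule borel_measurable_ang)

lemma distr_ang: "distr U borel ang = V"
proof (rule measure_eqI_lessThan)
  show "sets (distr U borel ang) = sets borel" "sets V = sets borel" by simp_all
  fix x
  have "emeasure (distr U borel ang) {x<..} = emeasure U {p. x < ang p}"
    by (subst emeasure_distr) (auto simp: vimage_def)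
  thus "emeasure (distr U borel ang) {x<..} < \<infinity>" "emeasure (distr U borel ang) {x<..} = emeasure V {x<..}"
    by (simp_all add: U_Ioi V_Ioi)
qed

end


definition lf :: "real \<Rightarrow> real \<Rightarrow> real" where
  "lf \<alpha> c = min pi (2*pi - \<alpha> - c) + max 0 (c - pi - \<alpha>)"

lemma sin_pos_iff:
  assumes "-2*pi < x" "x \<le> 2*pi"
  shows "sin x > 0 \<longleftrightarrow> (0 < x \<and> x < pi) \<or> x < -pi"
proof -
  consider "x < -pi" | "-pi \<le> x" "x \<le> 0" | "0 < x" "x < pi" | "pi \<le> x" by linarith
  thus ?thesis
  proof cases
    case 1
    have "sin x = sin (x + 2*pi)" by simp
    moreover have "sin (x + 2*pi) > 0" using 1 assms by (intro sin_gt_zero) auto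
    ultimately show ?thesis using 1 by simp
  next
    case 2
    have "sin x = - sin (-x)" by simp
    moreover have "sin (-x) \<ge> 0" using 2 by (intro sin_ge_zero) auto
    ultimately show ?thesis using 2 by auto
  next
    case 3 thus ?thesis using sin_gt_zero by auto
  next
    case 4
    have "sin x \<le> 0"
    proof (cases "x = pi \<or> x = 2*pi")
      case True thus ?thesis by auto
    next
      case False thus ?thesis using 4 assms sin_lt_zero[of x] by force
    qed
    moreover have "\<not> x < -pi" using 4 pi_gt_zero by linarith
    ultimately show ?thesis using 4 by auto
  qed
qed

lemma arc_measure:
  assumes a: "0 \<le> \<alpha>" "\<alpha> \<le> pi/2" and c: "\<alpha> \<le> c" "c \<le> 2*pi - \<alpha>" "c < 2*pi"
  shows "emeasure lborel ({\<alpha>..2*pi-\<alpha>} \<inter> {\<theta>. sin (\<theta> - c) > 0}) = ennreal (lf \<alpha> c)"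
proof -
  have sp: "sin (\<theta> - c) > 0 \<longleftrightarrow> (0 < \<theta> - c \<and> \<theta> - c < pi) \<or> \<theta> - c < -pi" if "\<theta> \<in> {\<alpha>..2*pi-\<alpha>}" for \<theta>
    using that c a by (intro sin_pos_iff) auto
  show ?thesis
  proof (cases "c \<le> pi - \<alpha>")
    case True
    have "{\<alpha>..2*pi-\<alpha>} \<inter> {\<theta>. sin (\<theta> - c) > 0} = {c<..<c+pi}"
    proof (intro set_eqI iffI)
      fix \<theta> assume "\<theta> \<in> {\<alpha>..2*pi-\<alpha>} \<inter> {\<theta>. sin (\<theta> - c) > 0}"
      thus "\<theta> \<in> {c<..<c+pi}" using sp[of \<theta>] True a by auto
    next
      fix \<theta> assume "\<theta> \<in> {c<..<c+pi}"
      thus "\<theta> \<in> {\<alpha>..2*pi-\<alpha>} \<inter> {\<theta>. sin (\<theta> - c) > 0}" using sp[of \<theta>] True a c by auto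
    qed
    moreover have "lf \<alpha> c = pi" using True a by (simp add: lf_def)
    ultimately show ?thesis by simp
  next
    case False
    have eq: "{\<alpha>..2*pi-\<alpha>} \<inter> {\<theta>. sin (\<theta> - c) > 0} = {c<..2*pi-\<alpha>} \<union> {\<alpha>..<c-pi}"
    proof (intro set_eqI iffI)
      fix \<theta> assume "\<theta> \<in> {\<alpha>..2*pi-\<alpha>} \<inter> {\<theta>. sin (\<theta> - c) > 0}"
      thus "\<theta> \<in> {c<..2*pi-\<alpha>} \<union> {\<alpha>..<c-pi}" using sp[of \<theta>] False a by auto
    next
      fix \<theta> assume "\<theta> \<in> {c<..2*pi-\<alpha>} \<union> {\<alpha>..<c-pi}"
      thus "\<theta> \<in> {\<alpha>..2*pi-\<alpha>} \<inter> {\<theta>. sin (\<theta> - c) > 0}" using sp[of \<theta>] False a c by auto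
    qed
    have "emeasure lborel ({c<..2*pi-\<alpha>} \<union> {\<alpha>..<c-pi}) = emeasure lborel {c<..2*pi-\<alpha>} + emeasure lborel {\<alpha>..<c-pi}"
    proof (intro plus_emeasure[symmetric])
      show "{c<..2*pi-\<alpha>} \<inter> {\<alpha>..<c-pi} = {}"
      proof (rule ccontr)
        assume "{c<..2*pi-\<alpha>} \<inter> {\<alpha>..<c-pi} \<noteq> {}"
        then obtain x where "c < x" "x < c - pi" by auto
        thus False using pi_gt_zero by linarith
      qed
    qed auto
    also have "\<dots> = ennreal (2*pi - \<alpha> - c) + ennreal (max 0 (c - pi - \<alpha>))"
      using c by (cases "\<alpha> \<le> c - pi") (auto simp: max_def)
    also have "\<dots> = ennreal (lf \<alpha> c)"
      using False c by (subst ennreal_plus[symmetric]) (auto simp: lf_def min_def)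
    finally show ?thesis unfolding eq .
  qed
qed

lemma lf_integral:
  assumes a: "0 \<le> \<alpha>" "\<alpha> \<le> pi/2"
  shows "((\<lambda>\<theta>. (lf \<alpha> \<theta>)^2) has_integral
     (pi^2 * (pi - 2*\<alpha>) + (pi^3 - (pi - 2*\<alpha>)^3) / 3 + (pi - 2*\<alpha>)^3)) {\<alpha>..2*pi-\<alpha>}"
proof -
  have p1: "((\<lambda>\<theta>. (lf \<alpha> \<theta>)^2) has_integral pi^2 * (pi - 2*\<alpha>)) {\<alpha>..pi-\<alpha>}"
  proof -
    have "((\<lambda>\<theta>. pi^2) has_integral pi^2 * (pi - 2*\<alpha>)) {\<alpha>..pi-\<alpha>}"
      using has_integral_const_real[of "pi^2" \<alpha> "pi-\<alpha>"] a by (simp add: mult.commute)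
    moreover have "(lf \<alpha> \<theta>)^2 = pi^2" if "\<theta> \<in> {\<alpha>..pi-\<alpha>}" for \<theta>
      using that a by (simp add: lf_def)
    ultimately show ?thesis using has_integral_cong[of "{\<alpha>..pi-\<alpha>}" "\<lambda>\<theta>. (lf \<alpha> \<theta>)^2" "\<lambda>\<theta>. pi^2"] by simp
  qed
  have p2: "((\<lambda>\<theta>. (lf \<alpha> \<theta>)^2) has_integral (pi^3 - (pi - 2*\<alpha>)^3) / 3) {pi-\<alpha>..pi+\<alpha>}"
  proof -
    have "((\<lambda>\<theta>. (2*pi - \<alpha> - \<theta>)^2) has_integral
        (((pi+\<alpha>) - (2*pi - \<alpha>))^3 / 3 - ((pi-\<alpha>) - (2*pi - \<alpha>))^3 / 3)) {pi-\<alpha>..pi+\<alpha>}"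
    proof (rule fundamental_theorem_of_calculus)
      show "pi - \<alpha> \<le> pi + \<alpha>" using a by simp
      fix x :: real
      have "((\<lambda>\<theta>. (\<theta> - (2*pi - \<alpha>))^3 / 3) has_real_derivative (of_nat 3 * (x - (2*pi - \<alpha>))^2 * 1) / 3) (at x within {pi-\<alpha>..pi+\<alpha>})"
        by (auto intro!: derivative_eq_intros)
      moreover have "(of_nat 3 * (x - (2*pi - \<alpha>))^2 * 1) / 3 = (2*pi - \<alpha> - x)^2"
        using power2_commute[of x "2*pi - \<alpha>"] by simp
      ultimately show "((\<lambda>\<theta>. (\<theta> - (2*pi - \<alpha>))^3 / 3) has_vector_derivative (2*pi - \<alpha> - x)^2) (at x within {pi-\<alpha>..pi+\<alpha>})"
        unfolding has_real_derivative_iff_has_vector_derivative[symmetric] by simp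
    qed
    moreover have "((pi+\<alpha>) - (2*pi - \<alpha>))^3 / 3 - ((pi-\<alpha>) - (2*pi - \<alpha>))^3 / 3 = (pi^3 - (pi - 2*\<alpha>)^3) / 3"
    proof -
      have e1: "(pi+\<alpha>) - (2*pi - \<alpha>) = -(pi - 2*\<alpha>)" by simp
      have e2: "(pi-\<alpha>) - (2*pi - \<alpha>) = -pi" by simp
      have "(-(pi - 2*\<alpha>))^3 = - ((pi - 2*\<alpha>)^3)" "(-pi)^3 = - (pi^3)" by (rule power_minus_odd, simp)+
      thus ?thesis unfolding e1 e2 by (simp add: diff_divide_distrib)
    qed
    moreover have "(lf \<alpha> \<theta>)^2 = (2*pi - \<alpha> - \<theta>)^2" if "\<theta> \<in> {pi-\<alpha>..pi+\<alpha>}" for \<theta>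
      using that a by (simp add: lf_def)
    ultimately show ?thesis using has_integral_cong[of "{pi-\<alpha>..pi+\<alpha>}" "\<lambda>\<theta>. (lf \<alpha> \<theta>)^2" "\<lambda>\<theta>. (2*pi - \<alpha> - \<theta>)^2"] by (simp add: diff_divide_distrib)
  qed
  have p3: "((\<lambda>\<theta>. (lf \<alpha> \<theta>)^2) has_integral (pi - 2*\<alpha>)^3) {pi+\<alpha>..2*pi-\<alpha>}"
  proof -
    have "((\<lambda>\<theta>. (pi - 2*\<alpha>)^2) has_integral (pi - 2*\<alpha>)^3) {pi+\<alpha>..2*pi-\<alpha>}"
      using has_integral_const_real[of "(pi - 2*\<alpha>)^2" "pi+\<alpha>" "2*pi-\<alpha>"] a
      by (simp add: power3_eq_cube power2_eq_square algebra_simps)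
    moreover have "(lf \<alpha> \<theta>)^2 = (pi - 2*\<alpha>)^2" if "\<theta> \<in> {pi+\<alpha>..2*pi-\<alpha>}" for \<theta>
      using that a by (simp add: lf_def)
    ultimately show ?thesis using has_integral_cong[of "{pi+\<alpha>..2*pi-\<alpha>}" "\<lambda>\<theta>. (lf \<alpha> \<theta>)^2" "\<lambda>\<theta>. (pi - 2*\<alpha>)^2"] by simp
  qed
  have "((\<lambda>\<theta>. (lf \<alpha> \<theta>)^2) has_integral (pi^2 * (pi - 2*\<alpha>) + (pi^3 - (pi - 2*\<alpha>)^3) / 3)) {\<alpha>..pi+\<alpha>}"
    using a by (intro has_integral_combine[OF _ _ p1 p2]) auto
  thus ?thesis
    using a by (intro has_integral_combine[OF _ _ _ p3]) auto
qed


context cd begin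

definition Hs :: "real \<times> real \<Rightarrow> (real \<times> real) set" where
  "Hs p = {q. cr p q > 0}"

definition g :: "real \<times> real \<Rightarrow> ennreal" where
  "g p = emeasure U (Hs p)"

definition G :: "real \<Rightarrow> ennreal" where
  "G c = ennreal (lf \<alpha> c / L)"

lemma cr_open: "open {z::(real\<times>real)\<times>(real\<times>real). cr (fst z) (snd z) > 0}"
  unfolding cr_def by (intro open_Collect_less continuous_intros)

lemma Hs_meas [measurable]: "Hs p \<in> sets borel"
  unfolding Hs_def cr_def by (intro borel_open open_Collect_less continuous_intros)

lemma U_zero: "emeasure U {0} = 0"
proof -
  have "S \<inter> {0} = {0}" using S_eq by auto
  thus ?thesis by (simp add: emeasure_U)
qed

lemma U_line: "u \<noteq> 0 \<Longrightarrow> emeasure U {q. cr u q = 0} = 0"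
proof -
  assume u: "u \<noteq> 0"
  have "emeasure lborel (S \<inter> {q. cr u q = 0}) \<le> emeasure lborel {q. cr u q = 0}"
    by (intro emeasure_mono) auto
  also have "\<dots> = 0" using line_null[OF u] by auto
  finally show ?thesis by (simp add: emeasure_U)
qed

lemma ang_S: "p \<in> S \<Longrightarrow> p \<noteq> 0 \<Longrightarrow> \<alpha> \<le> ang p \<and> ang p \<le> 2*pi - \<alpha>"
  using S_eq by (auto simp: band_def)

lemma cr_ang: "cr p q = norm p * norm q * sin (ang q - ang p)"
  using cr_pol[of "norm p" "ang p" "norm q" "ang q"] by (simp add: pol_ang)

lemma g_eq:
  assumes p: "p \<in> S" "p \<noteq> 0"
  shows "g p = G (ang p)"
proof -
  define c where "c = ang p"
  have c: "\<alpha> \<le> c" "c \<le> 2*pi - \<alpha>" "c < 2*pi" using ang_S[OF p] ang_range[of p] by (auto simp: c_def)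
  have np: "norm p > 0" using p by simp
  have A: "{\<theta>::real. sin (\<theta> - c) > 0} \<in> sets borel"
    by (intro borel_open open_Collect_less continuous_intros)
  have "Hs p = {q. sin (ang q - c) > 0} - {0}"
  proof (intro set_eqI iffI)
    fix q assume "q \<in> Hs p"
    hence "cr p q > 0" by (simp add: Hs_def)
    hence "q \<noteq> 0" "norm p * norm q * sin (ang q - c) > 0" by (auto simp: cr_def cr_ang[symmetric] c_def)
    moreover have "0 \<le> norm p * norm q" by simp
    ultimately show "q \<in> {q. sin (ang q - c) > 0} - {0}" using np by (auto simp: zero_less_mult_iff)
  next
    fix q assume "q \<in> {q. sin (ang q - c) > 0} - {0}"
    hence "sin (ang q - c) > 0" "norm q > 0" by auto
    hence "cr p q > 0" using np by (simp add: cr_ang c_def)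
    thus "q \<in> Hs p" by (simp add: Hs_def)
  qed
  hence "g p = emeasure U ({q. sin (ang q - c) > 0} - {0})" by (simp add: g_def)
  also have "\<dots> = emeasure U {q. sin (ang q - c) > 0}"
    by (rule emeasure_Diff_null_set) (auto simp: null_sets_def U_zero intro!: measurable_sets_borel[OF _ A])
  also have "\<dots> = emeasure (distr U borel ang) {\<theta>. sin (\<theta> - c) > 0}"
    using A by (subst emeasure_distr) (auto simp: vimage_def)
  also have "\<dots> = emeasure V {\<theta>. sin (\<theta> - c) > 0}" by (simp add: distr_ang)
  also have "\<dots> = emeasure lborel ({\<alpha>..2*pi-\<alpha>} \<inter> {\<theta>. sin (\<theta> - c) > 0}) / ennreal L"
    using A L_pos by simp
  also have "\<dots> = ennreal (lf \<alpha> c) / ennreal L"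
    using a0 a1 c by (simp add: arc_measure)
  also have "\<dots> = G c"
    unfolding G_def using L_pos c a0 a1 by (intro divide_ennreal) (auto simp: lf_def min_def max_def)
  finally show ?thesis by (simp add: c_def)
qed

abbreviation "K0 \<equiv> pi^2 * (pi - 2*\<alpha>) + (pi^3 - (pi - 2*\<alpha>)^3) / 3 + (pi - 2*\<alpha>)^3"

lemma G_meas [measurable]: "G \<in> borel_measurable borel"
  unfolding G_def lf_def by measurable

lemma g_meas_ae: "AE p in U. g p * g p = G (ang p) * G (ang p)"
proof (rule AE_uniform_measureI)
  show "S \<in> sets lborel" by simp
  show "AE x in lborel. x \<in> S \<longrightarrow> g x * g x = G (ang x) * G (ang x)"
    using AE_lborel_singleton[of 0] by eventually_elim (simp add: g_eq)
qed

lemma int_g2: "(\<integral>\<^sup>+p. g p * g p \<partial>U) = ennreal (K0 / L^3)"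
proof -
  define \<Omega> where "\<Omega> = {\<alpha>..2*pi-\<alpha>}"
  have "(\<integral>\<^sup>+p. g p * g p \<partial>U) = (\<integral>\<^sup>+p. G (ang p) * G (ang p) \<partial>U)"
    by (rule nn_integral_cong_AE[OF g_meas_ae])
  also have "\<dots> = (\<integral>\<^sup>+\<theta>. G \<theta> * G \<theta> \<partial>(distr U borel ang))"
    by (rule nn_integral_distr[symmetric]) auto
  also have "\<dots> = (\<integral>\<^sup>+\<theta>. G \<theta> * G \<theta> \<partial>V)" by (simp add: distr_ang)
  also have "\<dots> = (\<integral>\<^sup>+\<theta>. G \<theta> * G \<theta> * indicator \<Omega> \<theta> \<partial>lborel) / emeasure lborel \<Omega>"
    unfolding \<Omega>_def by (rule nn_integral_uniform_measure) auto
  also have "(\<integral>\<^sup>+\<theta>. G \<theta> * G \<theta> * indicator \<Omega> \<theta> \<partial>lborel) = (\<integral>\<^sup>+\<theta>. ennreal (indicator \<Omega> \<theta> * (lf \<alpha> \<theta> / L)^2) \<partial>lborel)"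
  proof (intro nn_integral_cong)
    fix \<theta> :: real
    show "G \<theta> * G \<theta> * indicator \<Omega> \<theta> = ennreal (indicator \<Omega> \<theta> * (lf \<alpha> \<theta> / L)^2)"
    proof (cases "\<theta> \<in> \<Omega>")
      case True
      hence "lf \<alpha> \<theta> \<ge> 0" using a0 by (auto simp: \<Omega>_def lf_def)
      hence "lf \<alpha> \<theta> / L \<ge> 0" using L_pos by simp
      hence "G \<theta> * G \<theta> = ennreal ((lf \<alpha> \<theta> / L) * (lf \<alpha> \<theta> / L))"
        unfolding G_def by (intro ennreal_mult[symmetric]) auto
      hence "G \<theta> * G \<theta> = ennreal ((lf \<alpha> \<theta> / L)^2)" by (simp only: power2_eq_square)
      thus ?thesis using True by simp
    qed simp
  qed
  also have "\<dots> = ennreal (K0 / L^2)"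
  proof (rule nn_integral_has_integral_lebesgue)
    show "0 \<le> (lf \<alpha> \<theta> / L)^2" for \<theta> by simp
    have "((\<lambda>\<theta>. (lf \<alpha> \<theta>)^2 * (1 / L^2)) has_integral K0 * (1 / L^2)) \<Omega>"
      unfolding \<Omega>_def by (rule has_integral_mult_left[OF lf_integral[OF a0 a1]])
    moreover have "(\<lambda>\<theta>. (lf \<alpha> \<theta>)^2 * (1 / L^2)) = (\<lambda>\<theta>. (lf \<alpha> \<theta> / L)^2)"
      by (simp add: power_divide)
    ultimately show "((\<lambda>\<theta>. (lf \<alpha> \<theta> / L)^2) has_integral K0 / L^2) \<Omega>" by simp
  qed
  also have "emeasure lborel \<Omega> = ennreal L" using L_pos by (simp add: \<Omega>_def)
  also have "ennreal (K0 / L^2) / ennreal L = ennreal (K0 / L^2 / L)"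
  proof (rule divide_ennreal)
    show "0 < L" by (rule L_pos)
    have "pi - 2*\<alpha> \<ge> 0" using a1 by simp
    moreover have "(pi - 2*\<alpha>)^3 \<le> pi^3" using a0 \<open>pi - 2*\<alpha> \<ge> 0\<close> by (intro power_mono) auto
    ultimately show "0 \<le> K0 / L^2" by simp
  qed
  also have "K0 / L^2 / L = K0 / L^3" by (simp add: power3_eq_cube power2_eq_square)
  finally show ?thesis .
qed

end


context cd begin

lemma UU_pps: "pair_prob_space U U"
  by (simp add: pair_prob_space_def pair_sigma_finite_def U_prob prob_space_imp_sigma_finite)

lemma U2_prob: "prob_space (U \<Otimes>\<^sub>M U)"
proof -
  interpret UU: pair_prob_space U U by (rule UU_pps)
  show ?thesis by (rule UU.prob_space_axioms)
qed

lemma UUU_pps: "pair_prob_space U (U \<Otimes>\<^sub>M U)"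
  by (simp add: pair_prob_space_def pair_sigma_finite_def U_prob U2_prob prob_space_imp_sigma_finite)

lemma sets_M2: "sets (U \<Otimes>\<^sub>M U) = sets (borel :: ((real\<times>real)\<times>(real\<times>real)) measure)"
proof -
  have "sets (U \<Otimes>\<^sub>M U) = sets ((lborel::(real\<times>real) measure) \<Otimes>\<^sub>M (lborel::(real\<times>real) measure))"
    by (intro sets_pair_measure_cong) simp_all
  thus ?thesis by (simp only: lborel_prod sets_lborel)
qed

lemma sets_M3: "sets (U \<Otimes>\<^sub>M (U \<Otimes>\<^sub>M U)) = sets (borel :: ((real\<times>real)\<times>(real\<times>real)\<times>(real\<times>real)) measure)"
proof -
  have "sets (U \<Otimes>\<^sub>M (U \<Otimes>\<^sub>M U)) = sets ((lborel::(real\<times>real) measure) \<Otimes>\<^sub>M (lborel::((real\<times>real)\<times>(real\<times>real)) measure))"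
  proof (rule sets_pair_measure_cong)
    show "sets (U \<Otimes>\<^sub>M U) = sets (lborel::((real\<times>real)\<times>(real\<times>real)) measure)"
      by (simp only: sets_M2 sets_lborel)
  qed simp
  thus ?thesis by (simp only: lborel_prod sets_lborel)
qed

lemma space_M3: "space (U \<Otimes>\<^sub>M (U \<Otimes>\<^sub>M U)) = UNIV"
  by (simp add: space_pair_measure)

definition "B1 = {z::(real\<times>real)\<times>(real\<times>real)\<times>(real\<times>real). cr (fst z) (fst (snd z)) > 0 \<and> cr (fst z) (snd (snd z)) > 0}"
definition "B2 = {z::(real\<times>real)\<times>(real\<times>real)\<times>(real\<times>real). cr (fst (snd z)) (fst z) > 0 \<and> cr (fst (snd z)) (snd (snd z)) > 0}"
definition "B3 = {z::(real\<times>real)\<times>(real\<times>real)\<times>(real\<times>real). cr (snd (snd z)) (fst z) > 0 \<and> cr (snd (snd z)) (fst (snd z)) > 0}"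
definition "Ec = {z::(real\<times>real)\<times>(real\<times>real)\<times>(real\<times>real). \<exists>v. inner v (fst z) > 0 \<and> inner v (fst (snd z)) > 0 \<and> inner v (snd (snd z)) > 0}"
definition "N12 = {z::(real\<times>real)\<times>(real\<times>real)\<times>(real\<times>real). cr (fst z) (fst (snd z)) = 0}"
definition "N23 = {z::(real\<times>real)\<times>(real\<times>real)\<times>(real\<times>real). cr (fst (snd z)) (snd (snd z)) = 0}"
definition "N13 = {z::(real\<times>real)\<times>(real\<times>real)\<times>(real\<times>real). cr (fst z) (snd (snd z)) = 0}"

lemma B_sets: "B1 \<in> sets borel" "B2 \<in> sets borel" "B3 \<in> sets borel"
  unfolding B1_def B2_def B3_def cr_def
  by (intro borel_open open_Collect_conj open_Collect_less continuous_intros)+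

lemma N_sets: "N12 \<in> sets borel" "N23 \<in> sets borel" "N13 \<in> sets borel"
  unfolding N12_def N23_def N13_def cr_def
  by (intro borel_closed closed_Collect_eq continuous_intros)+

lemma Ec_open: "open Ec"
  unfolding Ec_def
  by (intro open_Collect_ex open_Collect_conj open_Collect_less continuous_intros)

lemma Ec_sets: "Ec \<in> sets borel"
  using Ec_open by (rule borel_open)

lemma B_sub_Ec: "B1 \<union> B2 \<union> B3 \<subseteq> Ec"
proof -
  have "z \<in> Ec" if "z \<in> B1 \<union> B2 \<union> B3" for z
  proof -
    obtain p q s where z: "z = (p, q, s)" by (cases z) auto
    from that consider "cr p q > 0" "cr p s > 0" | "cr q p > 0" "cr q s > 0" | "cr s p > 0" "cr s q > 0"
      by (auto simp: B1_def B2_def B3_def z)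
    thus ?thesis
    proof cases
      case 1 thus ?thesis using cr_exists_v[of p q s] by (auto simp: Ec_def z)
    next
      case 2 thus ?thesis using cr_exists_v[of q p s] by (auto simp: Ec_def z)
    next
      case 3 thus ?thesis using cr_exists_v[of s p q] by (auto simp: Ec_def z)
    qed
  qed
  thus ?thesis by blast
qed

lemma Ec_sub: "Ec \<subseteq> B1 \<union> B2 \<union> B3 \<union> (N12 \<union> N23 \<union> N13)"
proof
  fix z assume "z \<in> Ec"
  obtain p q s where z: "z = (p, q, s)" by (cases z) auto
  from \<open>z \<in> Ec\<close> obtain v where v: "inner v p > 0" "inner v q > 0" "inner v s > 0" by (auto simp: Ec_def z)
  show "z \<in> B1 \<union> B2 \<union> B3 \<union> (N12 \<union> N23 \<union> N13)"
  proof (cases "cr p q = 0 \<or> cr q s = 0 \<or> cr p s = 0")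
    case True thus ?thesis by (auto simp: N12_def N23_def N13_def z)
  next
    case False
    thus ?thesis using exists_v_cr[OF v] by (auto simp: B1_def B2_def B3_def z)
  qed
qed

lemma B_disj: "B1 \<inter> B2 = {}" "(B1 \<union> B2) \<inter> B3 = {}"
  by (auto simp: B1_def B2_def B3_def cr_antisym[of "fst (snd _)" "fst _"] cr_antisym[of "snd (snd _)"])

end


context cd begin

lemma g_meas [measurable]: "g \<in> borel_measurable U"
proof -
  interpret U: prob_space U by (rule U_prob)
  define H2 where "H2 = {z::(real\<times>real)\<times>(real\<times>real). cr (fst z) (snd z) > 0}"
  have H2: "H2 \<in> sets (U \<Otimes>\<^sub>M U)"
    unfolding sets_M2 H2_def cr_def by (intro borel_open open_Collect_less continuous_intros)
  have "(\<lambda>p. emeasure U (Pair p -` H2)) \<in> borel_measurable U"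
    by (rule U.measurable_emeasure_Pair[OF H2])
  moreover have "(\<lambda>p. emeasure U (Pair p -` H2)) = g"
  proof
    fix p
    have "Pair p -` H2 = Hs p" by (auto simp: H2_def Hs_def)
    thus "emeasure U (Pair p -` H2) = g p" by (simp only: g_def)
  qed
  ultimately show ?thesis by (simp only:)
qed

lemma swap_int: "(\<integral>\<^sup>+p. (\<integral>\<^sup>+q. indicator {q. cr q p > 0} q * g q \<partial>U) \<partial>U) = (\<integral>\<^sup>+q. g q * g q \<partial>U)"
proof -
  interpret UU: pair_prob_space U U by (rule UU_pps)
  define H2 where "H2 = {z::(real\<times>real)\<times>(real\<times>real). cr (fst z) (snd z) > 0}"
  have H2: "H2 \<in> sets (U \<Otimes>\<^sub>M U)"
    unfolding sets_M2 H2_def cr_def by (intro borel_open open_Collect_less continuous_intros)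
  define f where "f x y = indicator {q. cr q y > 0} x * g x" for x y
  have fm: "case_prod f \<in> borel_measurable (U \<Otimes>\<^sub>M U)"
  proof -
    have "case_prod f = (\<lambda>z. indicator H2 z * g (fst z))"
      by (auto simp: f_def H2_def fun_eq_iff indicator_def)
    also have "\<dots> \<in> borel_measurable (U \<Otimes>\<^sub>M U)"
      using H2 by measurable
    finally show ?thesis .
  qed
  have "(\<integral>\<^sup>+p. (\<integral>\<^sup>+q. indicator {q. cr q p > 0} q * g q \<partial>U) \<partial>U) = (\<integral>\<^sup>+y. (\<integral>\<^sup>+x. f x y \<partial>U) \<partial>U)"
    by (simp add: f_def)
  also have "\<dots> = (\<integral>\<^sup>+x. (\<integral>\<^sup>+y. f x y \<partial>U) \<partial>U)"
    by (rule UU.Fubini'[OF fm])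
  also have "\<dots> = (\<integral>\<^sup>+x. g x * g x \<partial>U)"
  proof (intro nn_integral_cong)
    fix x
    have "(\<integral>\<^sup>+y. f x y \<partial>U) = (\<integral>\<^sup>+y. g x * indicator (Hs x) y \<partial>U)"
      by (intro nn_integral_cong) (auto simp: f_def Hs_def indicator_def)
    also have "\<dots> = g x * emeasure U (Hs x)" by (rule nn_integral_cmult_indicator) simp
    finally show "(\<integral>\<^sup>+y. f x y \<partial>U) = g x * g x" by (simp add: g_def)
  qed
  finally show ?thesis .
qed

abbreviation "M3 \<equiv> U \<Otimes>\<^sub>M (U \<Otimes>\<^sub>M U)"

lemma M3_sets: "A \<in> sets borel \<Longrightarrow> A \<in> sets M3"
  by (simp only: sets_M3)

lemma eB1: "emeasure M3 B1 = (\<integral>\<^sup>+q. g q * g q \<partial>U)"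
proof -
  interpret U: prob_space U by (rule U_prob)
  interpret U2: prob_space "U \<Otimes>\<^sub>M U" by (rule U2_prob)
  have "emeasure M3 B1 = (\<integral>\<^sup>+p. emeasure (U \<Otimes>\<^sub>M U) (Pair p -` B1) \<partial>U)"
    by (rule U2.emeasure_pair_measure_alt[OF M3_sets[OF B_sets(1)]])
  also have "\<dots> = (\<integral>\<^sup>+p. g p * g p \<partial>U)"
  proof (intro nn_integral_cong)
    fix p
    have "Pair p -` B1 = Hs p \<times> Hs p" by (auto simp: B1_def Hs_def)
    hence "emeasure (U \<Otimes>\<^sub>M U) (Pair p -` B1) = emeasure U (Hs p) * emeasure U (Hs p)"
      by (simp only: U.emeasure_pair_measure_Times[OF _ ]) (simp add: U.emeasure_pair_measure_Times)
    thus "emeasure (U \<Otimes>\<^sub>M U) (Pair p -` B1) = g p * g p" by (simp only: g_def)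
  qed
  finally show ?thesis .
qed

lemma eB2: "emeasure M3 B2 = (\<integral>\<^sup>+q. g q * g q \<partial>U)"
proof -
  interpret U: prob_space U by (rule U_prob)
  interpret U2: prob_space "U \<Otimes>\<^sub>M U" by (rule U2_prob)
  have "emeasure M3 B2 = (\<integral>\<^sup>+p. emeasure (U \<Otimes>\<^sub>M U) (Pair p -` B2) \<partial>U)"
    by (rule U2.emeasure_pair_measure_alt[OF M3_sets[OF B_sets(2)]])
  also have "\<dots> = (\<integral>\<^sup>+p. (\<integral>\<^sup>+q. indicator {q. cr q p > 0} q * g q \<partial>U) \<partial>U)"
  proof (intro nn_integral_cong)
    fix p
    have X: "Pair p -` B2 \<in> sets (U \<Otimes>\<^sub>M U)"
      by (rule sets_Pair1) (rule M3_sets[OF B_sets(2)])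
    have "emeasure (U \<Otimes>\<^sub>M U) (Pair p -` B2) = (\<integral>\<^sup>+q. emeasure U (Pair q -` (Pair p -` B2)) \<partial>U)"
      by (rule U.emeasure_pair_measure_alt[OF X])
    also have "\<dots> = (\<integral>\<^sup>+q. indicator {q. cr q p > 0} q * g q \<partial>U)"
    proof (intro nn_integral_cong)
      fix q
      show "emeasure U (Pair q -` (Pair p -` B2)) = indicator {q. cr q p > 0} q * g q"
      proof (cases "cr q p > 0")
        case True
        hence "Pair q -` (Pair p -` B2) = Hs q" by (auto simp: B2_def Hs_def)
        thus ?thesis using True by (simp add: g_def)
      next
        case False
        hence "Pair q -` (Pair p -` B2) = {}" by (auto simp: B2_def)
        thus ?thesis using False by simp
      qed
    qed
    finally show "emeasure (U \<Otimes>\<^sub>M U) (Pair p -` B2) = (\<integral>\<^sup>+q. indicator {q. cr q p > 0} q * g q \<partial>U)" .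
  qed
  also have "\<dots> = (\<integral>\<^sup>+q. g q * g q \<partial>U)" by (rule swap_int)
  finally show ?thesis .
qed

lemma eB3: "emeasure M3 B3 = (\<integral>\<^sup>+q. g q * g q \<partial>U)"
proof -
  interpret U: prob_space U by (rule U_prob)
  interpret U2: prob_space "U \<Otimes>\<^sub>M U" by (rule U2_prob)
  interpret UU: pair_prob_space U U by (rule UU_pps)
  have "emeasure M3 B3 = (\<integral>\<^sup>+p. emeasure (U \<Otimes>\<^sub>M U) (Pair p -` B3) \<partial>U)"
    by (rule U2.emeasure_pair_measure_alt[OF M3_sets[OF B_sets(3)]])
  also have "\<dots> = (\<integral>\<^sup>+p. (\<integral>\<^sup>+q. indicator {q. cr q p > 0} q * g q \<partial>U) \<partial>U)"
  proof (intro nn_integral_cong)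
    fix p
    have X: "Pair p -` B3 \<in> sets (U \<Otimes>\<^sub>M U)"
      by (rule sets_Pair1) (rule M3_sets[OF B_sets(3)])
    have "emeasure (U \<Otimes>\<^sub>M U) (Pair p -` B3) = (\<integral>\<^sup>+s. emeasure U ((\<lambda>q. (q, s)) -` (Pair p -` B3)) \<partial>U)"
      by (rule UU.emeasure_pair_measure_alt2[OF X])
    also have "\<dots> = (\<integral>\<^sup>+q. indicator {q. cr q p > 0} q * g q \<partial>U)"
    proof (intro nn_integral_cong)
      fix s
      show "emeasure U ((\<lambda>q. (q, s)) -` (Pair p -` B3)) = indicator {q. cr q p > 0} s * g s"
      proof (cases "cr s p > 0")
        case True
        hence "(\<lambda>q. (q, s)) -` (Pair p -` B3) = Hs s" by (auto simp: B3_def Hs_def)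
        thus ?thesis using True by (simp add: g_def)
      next
        case False
        hence "(\<lambda>q. (q, s)) -` (Pair p -` B3) = {}" by (auto simp: B3_def)
        thus ?thesis using False by simp
      qed
    qed
    finally show "emeasure (U \<Otimes>\<^sub>M U) (Pair p -` B3) = (\<integral>\<^sup>+q. indicator {q. cr q p > 0} q * g q \<partial>U)" .
  qed
  also have "\<dots> = (\<integral>\<^sup>+q. g q * g q \<partial>U)" by (rule swap_int)
  finally show ?thesis .
qed

lemma AE_nz: "AE p in U. p \<noteq> 0"
  by (rule AE_I'[of "{0}"]) (auto simp: null_sets_def U_zero)

lemma U_line_AE: "AE p in U. emeasure U {q. cr p q = 0} = 0"
  using AE_nz by eventually_elim (rule U_line)

lemma cr_sets: "{q. cr p q = 0} \<in> sets U"
  by simp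

lemma eN12: "emeasure M3 N12 = 0"
proof -
  interpret U: prob_space U by (rule U_prob)
  interpret U2: prob_space "U \<Otimes>\<^sub>M U" by (rule U2_prob)
  have "emeasure M3 N12 = (\<integral>\<^sup>+p. emeasure (U \<Otimes>\<^sub>M U) (Pair p -` N12) \<partial>U)"
    by (rule U2.emeasure_pair_measure_alt[OF M3_sets[OF N_sets(1)]])
  also have "\<dots> = (\<integral>\<^sup>+p. 0 \<partial>U)"
  proof (rule nn_integral_cong_AE)
    show "AE p in U. emeasure (U \<Otimes>\<^sub>M U) (Pair p -` N12) = 0"
      using U_line_AE
    proof eventually_elim
      fix p assume h: "emeasure U {q. cr p q = 0} = 0"
      have "Pair p -` N12 = {q. cr p q = 0} \<times> UNIV" by (auto simp: N12_def)
      moreover have "emeasure (U \<Otimes>\<^sub>M U) ({q. cr p q = 0} \<times> UNIV) = emeasure U {q. cr p q = 0} * emeasure U UNIV"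
        by (rule U.emeasure_pair_measure_Times) simp_all
      ultimately have "emeasure (U \<Otimes>\<^sub>M U) (Pair p -` N12) = emeasure U {q. cr p q = 0} * emeasure U UNIV"
        by simp
      thus "emeasure (U \<Otimes>\<^sub>M U) (Pair p -` N12) = 0" using h by simp
    qed
  qed
  finally show ?thesis by simp
qed

lemma eN13: "emeasure M3 N13 = 0"
proof -
  interpret U: prob_space U by (rule U_prob)
  interpret U2: prob_space "U \<Otimes>\<^sub>M U" by (rule U2_prob)
  have "emeasure M3 N13 = (\<integral>\<^sup>+p. emeasure (U \<Otimes>\<^sub>M U) (Pair p -` N13) \<partial>U)"
    by (rule U2.emeasure_pair_measure_alt[OF M3_sets[OF N_sets(3)]])
  also have "\<dots> = (\<integral>\<^sup>+p. 0 \<partial>U)"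
  proof (rule nn_integral_cong_AE)
    show "AE p in U. emeasure (U \<Otimes>\<^sub>M U) (Pair p -` N13) = 0"
      using U_line_AE
    proof eventually_elim
      fix p assume h: "emeasure U {q. cr p q = 0} = 0"
      have "Pair p -` N13 = UNIV \<times> {q. cr p q = 0}" by (auto simp: N13_def)
      moreover have "emeasure (U \<Otimes>\<^sub>M U) (UNIV \<times> {q. cr p q = 0}) = emeasure U UNIV * emeasure U {q. cr p q = 0}"
        by (rule U.emeasure_pair_measure_Times) simp_all
      ultimately have "emeasure (U \<Otimes>\<^sub>M U) (Pair p -` N13) = emeasure U UNIV * emeasure U {q. cr p q = 0}"
        by simp
      thus "emeasure (U \<Otimes>\<^sub>M U) (Pair p -` N13) = 0" using h by simp
    qed
  qed
  finally show ?thesis by simp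
qed

lemma eN23: "emeasure M3 N23 = 0"
proof -
  interpret U: prob_space U by (rule U_prob)
  interpret U2: prob_space "U \<Otimes>\<^sub>M U" by (rule U2_prob)
  define N' where "N' = {z::(real\<times>real)\<times>(real\<times>real). cr (fst z) (snd z) = 0}"
  have N': "N' \<in> sets (U \<Otimes>\<^sub>M U)"
    unfolding sets_M2 N'_def cr_def by (intro borel_closed closed_Collect_eq continuous_intros)
  have "emeasure (U \<Otimes>\<^sub>M U) N' = (\<integral>\<^sup>+q. emeasure U (Pair q -` N') \<partial>U)"
    by (rule U.emeasure_pair_measure_alt[OF N'])
  also have "\<dots> = (\<integral>\<^sup>+q. 0 \<partial>U)"
  proof (rule nn_integral_cong_AE)
    show "AE q in U. emeasure U (Pair q -` N') = 0"
      using U_line_AE by eventually_elim (simp add: N'_def vimage_def)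
  qed
  finally have N'0: "emeasure (U \<Otimes>\<^sub>M U) N' = 0" by simp
  have "emeasure M3 N23 = (\<integral>\<^sup>+p. emeasure (U \<Otimes>\<^sub>M U) (Pair p -` N23) \<partial>U)"
    by (rule U2.emeasure_pair_measure_alt[OF M3_sets[OF N_sets(2)]])
  also have "\<dots> = (\<integral>\<^sup>+p. 0 \<partial>U)"
  proof (intro nn_integral_cong)
    fix p
    have "Pair p -` N23 = N'" by (auto simp: N23_def N'_def)
    thus "emeasure (U \<Otimes>\<^sub>M U) (Pair p -` N23) = 0" using N'0 by simp
  qed
  finally show ?thesis by simp
qed

lemma three_enn: "0 \<le> (y::real) \<Longrightarrow> ennreal y + ennreal y + ennreal y = ennreal (3*y)"
proof -
  assume y: "0 \<le> y"
  have "ennreal (y + y + y) = ennreal y + ennreal y + ennreal y"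
    using y by (simp only: ennreal_plus add_nonneg_nonneg)
  moreover have "y + y + y = 3 * y" by simp
  ultimately show ?thesis by simp
qed

lemma K0L_nonneg: "0 \<le> K0 / L^3"
proof -
  have "pi - 2*\<alpha> \<ge> 0" using a1 by simp
  moreover have "(pi - 2*\<alpha>)^3 \<le> pi^3" using a0 \<open>pi - 2*\<alpha> \<ge> 0\<close> by (intro power_mono) auto
  ultimately show ?thesis using L_pos by simp
qed

lemma eEc: "emeasure M3 Ec = ennreal (3 * (K0 / L^3))"
proof -
  have Bs: "B1 \<union> B2 \<union> B3 \<in> sets M3" using B_sets by (intro sets.Un M3_sets) auto
  have "N12 \<in> null_sets M3" using eN12 M3_sets[OF N_sets(1)] by (simp add: null_sets_def)
  moreover have "N23 \<in> null_sets M3" using eN23 M3_sets[OF N_sets(2)] by (simp add: null_sets_def)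
  moreover have "N13 \<in> null_sets M3" using eN13 M3_sets[OF N_sets(3)] by (simp add: null_sets_def)
  ultimately have Nn: "N12 \<union> N23 \<union> N13 \<in> null_sets M3" by (intro null_sets.Un)
  have rest: "Ec - (B1 \<union> B2 \<union> B3) \<in> null_sets M3"
  proof (rule null_sets_subset[OF Nn])
    show "Ec - (B1 \<union> B2 \<union> B3) \<in> sets M3" by (rule sets.Diff[OF M3_sets[OF Ec_sets] Bs])
    show "Ec - (B1 \<union> B2 \<union> B3) \<subseteq> N12 \<union> N23 \<union> N13" using Ec_sub by auto
  qed
  have "Ec = (B1 \<union> B2 \<union> B3) \<union> (Ec - (B1 \<union> B2 \<union> B3))" using B_sub_Ec by auto
  hence "emeasure M3 Ec = emeasure M3 (B1 \<union> B2 \<union> B3)"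
    using emeasure_Un_null_set[OF Bs rest] by simp
  also have "\<dots> = emeasure M3 (B1 \<union> B2) + emeasure M3 B3"
    by (rule plus_emeasure[OF sets.Un[OF M3_sets[OF B_sets(1)] M3_sets[OF B_sets(2)]] M3_sets[OF B_sets(3)] B_disj(2), symmetric])
  also have "emeasure M3 (B1 \<union> B2) = emeasure M3 B1 + emeasure M3 B2"
    by (rule plus_emeasure[OF M3_sets[OF B_sets(1)] M3_sets[OF B_sets(2)] B_disj(1), symmetric])
  also have "emeasure M3 B1 + emeasure M3 B2 + emeasure M3 B3 = ennreal (K0 / L^3) + ennreal (K0 / L^3) + ennreal (K0 / L^3)"
    unfolding eB1 eB2 eB3 int_g2 by (rule refl)
  also have "\<dots> = ennreal (3 * (K0 / L^3))"
    by (rule three_enn[OF K0L_nonneg])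
  finally show ?thesis .
qed

end


lemma final_alg:
  fixes a :: real
  assumes "0 \<le> a" "a \<le> 1/2"
  shows "1 - 3 * ((pi^2 * (pi - 2*(pi*a)) + (pi^3 - (pi - 2*(pi*a))^3) / 3 + (pi - 2*(pi*a))^3) / (2*pi - 2*(pi*a))^3)
       = (1 + a) * (1 - 2*a)^2 / (4 * (1 - a)^3)"
proof -
  define k where "k = 3 * (1 - 2*a) + (1 - (1 - 2*a)^3) + 3 * (1 - 2*a)^3"
  define D where "D = (1 - a)^3"
  have t3: "3 * (X + Y / 3 + Z) = 3*X + Y + 3*Z" for X Y Z :: real by simp
  have K: "3 * (pi^2 * (pi - 2*(pi*a)) + (pi^3 - (pi - 2*(pi*a))^3) / 3 + (pi - 2*(pi*a))^3) = pi^3 * k"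
    unfolding t3 by (simp add: k_def power3_eq_cube power2_eq_square algebra_simps)
  have Lc: "(2*pi - 2*(pi*a))^3 = pi^3 * (8 * D)"
    by (simp add: D_def power3_eq_cube algebra_simps)
  have D0: "D > 0" using assms by (simp add: D_def)
  have poly: "8 * D - k = 2 * ((1 + a) * (1 - 2*a)^2)"
    by (simp add: k_def D_def power3_eq_cube power2_eq_square algebra_simps)
  have "3 * ((pi^2 * (pi - 2*(pi*a)) + (pi^3 - (pi - 2*(pi*a))^3) / 3 + (pi - 2*(pi*a))^3) / (2*pi - 2*(pi*a))^3)
      = k / (8 * D)"
    unfolding times_divide_eq_right K Lc by simp
  moreover have "1 - k / (8 * D) = (8 * D - k) / (8 * D)" using D0 by (simp add: field_simps)
  moreover have "(8 * D - k) / (8 * D) = (1 + a) * (1 - 2*a)^2 / (4 * D)"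
    unfolding poly using D0 by simp
  ultimately show ?thesis by (simp add: D_def)
qed

context cd begin

lemma final_locale:
  "measure M3 {(p, q, s). (0::real \<times> real) \<in> convex hull {p, q, s}} = 1 - 3 * (K0 / L^3)"
proof -
  interpret P: pair_prob_space U "U \<Otimes>\<^sub>M U" by (rule UUU_pps)
  have E: "{(p, q, s). (0::real \<times> real) \<in> convex hull {p, q, s}} = space M3 - Ec"
    by (auto simp: space_M3 Ec_def hull0_iff)
  have mEc: "measure M3 Ec = 3 * (K0 / L^3)"
    by (rule measure_eq_emeasure_eq_ennreal[OF _ eEc]) (rule mult_nonneg_nonneg[OF _ K0L_nonneg], simp)
  have "measure M3 (space M3 - Ec) = 1 - measure M3 Ec"
    by (rule P.prob_compl) (rule M3_sets[OF Ec_sets])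
  thus ?thesis unfolding E mEc .
qed

end

theorem mainTheorem7:
  fixes r a :: real
  assumes "r > 0" and "0 \<le> a" and "a \<le> 1/2"
  defines "U \<equiv> uniform_on (cut_disk r (pi * a))"
  shows "measure (U \<Otimes>\<^sub>M U \<Otimes>\<^sub>M U)
           {(p, q, s). (0::real \<times> real) \<in> convex hull {p, q, s}}
         = (1 + a) * (1 - 2*a)^2 / (4 * (1 - a)^3)"
proof -
  interpret cd r "pi * a"
    using assms by unfold_locales auto
  have "measure (U \<Otimes>\<^sub>M U \<Otimes>\<^sub>M U) {(p, q, s). (0::real \<times> real) \<in> convex hull {p, q, s}}
      = 1 - 3 * ((pi^2 * (pi - 2*(pi*a)) + (pi^3 - (pi - 2*(pi*a))^3) / 3 + (pi - 2*(pi*a))^3) / (2*pi - 2*(pi*a))^3)"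
    unfolding U_def uniform_on_def by (rule final_locale)
  also have "\<dots> = (1 + a) * (1 - 2*a)^2 / (4 * (1 - a)^3)"
    using assms by (intro final_alg) auto
  finally show ?thesis .
qed


end
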